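(* (a) $NN(IP_n)\ge 2^{n/2}$. (b) $NN(x_1\oplus\cdots\oplus x_n)\ge n+1$.
   Context: For a Boolean function $f:\{0,1\}^m\to\{0,1\}$, a nearest neighbor representation is a pair of disjoint sets $(P,N)$ of points of $\mathbb R^m$ such that for every $a\in\{0,1\}^m$: if $f(a)=1$, there is $b\in P$ with $d(a,b)<d(a,c)$ for all $c\in N$; if $f(a)=0$, there is $b\in N$ with $d(a,b)<d(a,c)$ for all $c\in P$ ($d$ = Euclidean distance). $NN(f)$ is the minimum of $|P\cup N|$ over all such representations. The mod 2 inner product function of $2n$ variables is $IP_n(x_1,\dots,x_n,y_1,\dots,y_n)=(x_1\wedge y_1)\oplus\cdots\oplus(x_n\wedge y_n)$. *)

theory Defs
  imports Complex_Main
begin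

text \<open>Points of R^m are real lists of length m; Boolean inputs are bool lists of length m,
  embedded into R^m via 0/1. A Boolean function of m variables is f :: bool list => bool,
  considered on lists of length m.\<close>

definition edist :: "real list \<Rightarrow> real list \<Rightarrow> real" where
  "edist a b = sqrt (\<Sum>i<length a. (a ! i - b ! i)^2)"

definition emb :: "bool list \<Rightarrow> real list" where
  "emb a = map (\<lambda>x. if x then 1 else 0) a"

definition nn_rep :: "nat \<Rightarrow> (bool list \<Rightarrow> bool) \<Rightarrow> real list set \<Rightarrow> real list set \<Rightarrow> bool" where
  "nn_rep m f P N \<longleftrightarrow>
     (\<forall>p\<in>P. length p = m) \<and> (\<forall>p\<in>N. length p = m) \<and> P \<inter> N = {} \<and>
     (\<forall>a. length a = m \<longrightarrow>
        (f a \<longrightarrow> (\<exists>b\<in>P. \<forall>c\<in>N. edist (emb a) b < edist (emb a) c)) \<and>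
        (\<not> f a \<longrightarrow> (\<exists>b\<in>N. \<forall>c\<in>P. edist (emb a) b < edist (emb a) c)))"

definition NN :: "nat \<Rightarrow> (bool list \<Rightarrow> bool) \<Rightarrow> nat" where
  "NN m f = (LEAST k. \<exists>P N. finite P \<and> finite N \<and> nn_rep m f P N \<and> card (P \<union> N) = k)"

text \<open>IP_n on 2n variables: x_i = a!i, y_i = a!(n+i).\<close>
definition IP :: "nat \<Rightarrow> bool list \<Rightarrow> bool" where
  "IP n a = odd (card {i. i < n \<and> a ! i \<and> a ! (n + i)})"

definition parity :: "bool list \<Rightarrow> bool" where
  "parity a = odd (length (filter id a))"

end

theory Submission
  imports Defs "Jordan_Normal_Form.Determinant" "HOL-Computational_Algebra.Polynomial"
begin

lemma exp_neg_tendsto0: "(0::real) < d \<Longrightarrow> ((\<lambda>x. exp (- (x * d))) \<longlongrightarrow> 0) at_top"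
proof -
  assume d: "0 < d"
  have "filterlim (\<lambda>x::real. d * x) at_top at_top"
    by (rule filterlim_tendsto_pos_mult_at_top[OF tendsto_const d filterlim_ident])
  hence "filterlim (\<lambda>x::real. x * d) at_top at_top" by (simp add: mult.commute)
  hence "filterlim (\<lambda>x::real. - (x * d)) at_bot at_top"
    by (simp add: filterlim_uminus_at_top)
  thus ?thesis by (rule filterlim_compose[OF exp_at_bot])
qed

definition sqd :: "real list \<Rightarrow> bool list \<Rightarrow> real" where
  "sqd y a = (\<Sum>i<length a. (emb a ! i - y ! i)^2)"

lemma length_emb[simp]: "length (emb a) = length a"
  by (simp add: emb_def)

lemma nth_emb: "i < length a \<Longrightarrow> emb a ! i = (if a ! i then 1 else 0)"
  by (simp add: emb_def)

lemma edist_sqd: "edist (emb a) y = sqrt (sqd y a)"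
  by (simp add: edist_def sqd_def)

lemma edist_less_iff: "edist (emb a) b < edist (emb a) c \<longleftrightarrow> sqd b a < sqd c a"
  by (simp add: edist_sqd)

lemma exp_sqd:
  assumes "length a = m"
  shows "exp (- (l * sqd y a)) =
    (\<Prod>i<m. if a!i then exp (- (l * (1 - y!i)^2)) else exp (- (l * (y!i)^2)))"
proof -
  have "exp (- (l * sqd y a)) = exp (\<Sum>i<m. - (l * (emb a ! i - y!i)^2))"
    using assms by (simp add: sqd_def sum_distrib_left sum_negf)
  also have "\<dots> = (\<Prod>i<m. exp (- (l * (emb a ! i - y!i)^2)))"
    by (simp add: exp_sum)
  also have "\<dots> = (\<Prod>i<m. if a!i then exp (- (l * (1 - y!i)^2)) else exp (- (l * (y!i)^2)))"
    using assms by (intro prod.cong) (auto simp: nth_emb power2_commute)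
  finally show ?thesis .
qed

lemma finite_len: "finite {a :: bool list. length a = m}"
  using finite_lists_length_eq[of "UNIV :: bool set" m] by simp

lemma sqd_self: "sqd (emb a) a = 0"
  by (simp add: sqd_def)

lemma sqd_pos:
  assumes "length a = length a'" "a \<noteq> a'"
  shows "0 < sqd (emb a') a"
proof -
  obtain i where i: "i < length a" "a ! i \<noteq> a' ! i"
    using assms nth_equalityI by blast
  have "0 < (emb a ! i - emb a' ! i)^2"
    using i assms by (auto simp: nth_emb)
  also have "\<dots> \<le> sqd (emb a') a"
    unfolding sqd_def using i by (intro member_le_sum) auto
  finally show ?thesis .
qed

lemma inj_emb: "emb a = emb a' \<Longrightarrow> a = a'"
proof -
  assume e: "emb a = emb a'"
  hence l: "length a = length a'" by (metis length_emb)
  show "a = a'"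
  proof (rule ccontr)
    assume "a \<noteq> a'"
    hence "0 < sqd (emb a') a" using sqd_pos l by blast
    thus False by (metis e sqd_self less_irrefl)
  qed
qed

lemma nn_rep_exists:
  "\<exists>P N. finite P \<and> finite N \<and> nn_rep m f P N"
proof -
  define P where "P = emb ` {a. length a = m \<and> f a}"
  define N where "N = emb ` {a. length a = m \<and> \<not> f a}"
  have fP: "finite P" unfolding P_def
    by (intro finite_imageI finite_subset[OF _ finite_len[of m]]) auto
  have fN: "finite N" unfolding N_def
    by (intro finite_imageI finite_subset[OF _ finite_len[of m]]) auto
  have l1: "\<forall>p\<in>P. length p = m" unfolding P_def by auto
  have l2: "\<forall>p\<in>N. length p = m" unfolding N_def by auto
  have dj: "P \<inter> N = {}"
  proof (rule ccontr)
    assume "P \<inter> N \<noteq> {}"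
    then obtain y where "y \<in> P" "y \<in> N" by blast
    then obtain a a' where "y = emb a" "f a" "y = emb a'" "\<not> f a'" unfolding P_def N_def by blast
    thus False using inj_emb by metis
  qed
  have c1: "\<exists>b\<in>P. \<forall>c\<in>N. edist (emb a) b < edist (emb a) c" if la: "length a = m" and fa: "f a" for a
  proof (intro bexI ballI)
    show "emb a \<in> P" unfolding P_def using la fa by blast
    fix c assume "c \<in> N"
    then obtain a' where a': "c = emb a'" "length a' = m" "\<not> f a'" unfolding N_def by blast
    have "a \<noteq> a'" using fa a' by blast
    hence "0 < sqd (emb a') a" using sqd_pos[of a a'] la a' by simp
    thus "edist (emb a) (emb a) < edist (emb a) c"
      unfolding edist_less_iff a'(1) sqd_self by simp
  qed
  have c2: "\<exists>b\<in>N. \<forall>c\<in>P. edist (emb a) b < edist (emb a) c" if la: "length a = m" and fa: "\<not> f a" for a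
  proof (intro bexI ballI)
    show "emb a \<in> N" unfolding N_def using la fa by blast
    fix c assume "c \<in> P"
    then obtain a' where a': "c = emb a'" "length a' = m" "f a'" unfolding P_def by blast
    have "a \<noteq> a'" using fa a' by blast
    hence "0 < sqd (emb a') a" using sqd_pos[of a a'] la a' by simp
    thus "edist (emb a) (emb a) < edist (emb a) c"
      unfolding edist_less_iff a'(1) sqd_self by simp
  qed
  have "nn_rep m f P N"
    unfolding nn_rep_def using l1 l2 dj c1 c2 by blast
  thus ?thesis using fP fN by blast
qed

lemma NN_ge:
  assumes "\<And>P N. finite P \<Longrightarrow> finite N \<Longrightarrow> nn_rep m f P N \<Longrightarrow> B \<le> card (P \<union> N)"
  shows "B \<le> NN m f"
proof -
  obtain P0 N0 where h: "finite P0" "finite N0" "nn_rep m f P0 N0" using nn_rep_exists by blast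
  have ex: "\<exists>k P N. finite P \<and> finite N \<and> nn_rep m f P N \<and> card (P \<union> N) = k"
    using h by (intro exI[of _ "card (P0 \<union> N0)"] exI[of _ P0] exI[of _ N0]) simp
  have "\<exists>P N. finite P \<and> finite N \<and> nn_rep m f P N \<and> card (P \<union> N) = NN m f"
    unfolding NN_def by (rule LeastI_ex[OF ex])
  then obtain P N where "finite P" "finite N" "nn_rep m f P N" "card (P \<union> N) = NN m f" by blast
  thus ?thesis using assms[of P N] by simp
qed

lemma dominate:
  fixes A B :: "real list set"
  assumes fA: "finite A" and fB: "finite B" and b0: "b0 \<in> A" and lt: "\<forall>c\<in>B. sqd b0 a < sqd c a"
  shows "eventually (\<lambda>l. (\<Sum>c\<in>B. exp (- (l * sqd c a))) < (\<Sum>b\<in>A. exp (- (l * sqd b a)))) at_top"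
proof -
  have "((\<lambda>l. \<Sum>c\<in>B. exp (- (l * (sqd c a - sqd b0 a)))) \<longlongrightarrow> 0) at_top"
    by (rule tendsto_null_sum) (use lt in \<open>auto intro: exp_neg_tendsto0\<close>)
  hence ev: "eventually (\<lambda>l. (\<Sum>c\<in>B. exp (- (l * (sqd c a - sqd b0 a)))) < 1) at_top"
    by (rule order_tendstoD(2)) simp
  show ?thesis
  proof (rule eventually_mono[OF ev])
    fix l :: real
    assume h: "(\<Sum>c\<in>B. exp (- (l * (sqd c a - sqd b0 a)))) < 1"
    have "(\<Sum>c\<in>B. exp (- (l * sqd c a))) = exp (- (l * sqd b0 a)) * (\<Sum>c\<in>B. exp (- (l * (sqd c a - sqd b0 a))))"
      by (simp add: sum_distrib_left exp_add[symmetric] algebra_simps)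
    also have "\<dots> < exp (- (l * sqd b0 a)) * 1"
      by (rule mult_strict_left_mono[OF h]) simp
    also have "\<dots> \<le> (\<Sum>b\<in>A. exp (- (l * sqd b a)))"
      using member_le_sum[of b0 A "\<lambda>b. exp (- (l * sqd b a))"] b0 fA by simp
    finally show "(\<Sum>c\<in>B. exp (- (l * sqd c a))) < (\<Sum>b\<in>A. exp (- (l * sqd b a)))" .
  qed
qed

lemma exp_rep:
  assumes fP: "finite P" and fN: "finite N" and rep: "nn_rep m f P N"
  shows "\<exists>w p q. (\<forall>j i. 0 < p j i \<and> 0 < q j i) \<and>
    (\<forall>a. length a = m \<longrightarrow>
       (\<Sum>j<card (P \<union> N). w j * (\<Prod>i<m. if a!i then p j i else q j i)) \<noteq> (0::real) \<and>
       (f a \<longleftrightarrow> 0 < (\<Sum>j<card (P \<union> N). w j * (\<Prod>i<m. if a!i then p j i else q j i))))"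
proof -
  define G where "G l a = (\<Sum>b\<in>P. exp (- (l * sqd b a))) - (\<Sum>c\<in>N. exp (- (l * sqd c a)))" for l a
  have disj: "P \<inter> N = {}" using rep unfolding nn_rep_def by blast
  have ev1: "\<forall>a\<in>{a. length a = m}. eventually (\<lambda>l. (f a \<longrightarrow> 0 < G l a) \<and> (\<not> f a \<longrightarrow> G l a < 0)) at_top"
  proof
    fix a :: "bool list" assume "a \<in> {a. length a = m}"
    hence la: "length a = m" by simp
    show "eventually (\<lambda>l. (f a \<longrightarrow> 0 < G l a) \<and> (\<not> f a \<longrightarrow> G l a < 0)) at_top"
    proof (cases "f a")
      case True
      then obtain b where b: "b \<in> P" "\<forall>c\<in>N. edist (emb a) b < edist (emb a) c"
        using rep la unfolding nn_rep_def by blast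
      have "eventually (\<lambda>l. (\<Sum>c\<in>N. exp (- (l * sqd c a))) < (\<Sum>b\<in>P. exp (- (l * sqd b a)))) at_top"
        by (rule dominate[OF fP fN b(1)]) (use b(2) in \<open>simp add: edist_less_iff\<close>)
      thus ?thesis by (rule eventually_mono) (use True in \<open>simp add: G_def\<close>)
    next
      case False
      then obtain b where b: "b \<in> N" "\<forall>c\<in>P. edist (emb a) b < edist (emb a) c"
        using rep la unfolding nn_rep_def by blast
      have "eventually (\<lambda>l. (\<Sum>c\<in>P. exp (- (l * sqd c a))) < (\<Sum>b\<in>N. exp (- (l * sqd b a)))) at_top"
        by (rule dominate[OF fN fP b(1)]) (use b(2) in \<open>simp add: edist_less_iff\<close>)
      thus ?thesis by (rule eventually_mono) (use False in \<open>simp add: G_def\<close>)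
    qed
  qed
  have "eventually (\<lambda>l. \<forall>a\<in>{a. length a = m}. (f a \<longrightarrow> 0 < G l a) \<and> (\<not> f a \<longrightarrow> G l a < 0)) at_top"
    by (rule eventually_ball_finite[OF finite_len ev1])
  then obtain L where L: "\<And>l. l \<ge> L \<Longrightarrow> \<forall>a\<in>{a. length a = m}. (f a \<longrightarrow> 0 < G l a) \<and> (\<not> f a \<longrightarrow> G l a < 0)"
    unfolding eventually_at_top_linorder by blast
  define l where "l = L"
  have l: "\<forall>a\<in>{a. length a = m}. (f a \<longrightarrow> 0 < G l a) \<and> (\<not> f a \<longrightarrow> G l a < 0)"
    using L[of L] unfolding l_def by simp
  obtain e where e: "bij_betw e {0..<card (P \<union> N)} (P \<union> N)"
    using ex_bij_betw_nat_finite[of "P \<union> N"] fP fN by blast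
  define w where "w j = (if e j \<in> P then 1 else -1::real)" for j
  define p where "p j i = exp (- (l * (1 - e j ! i)^2))" for j i
  define q where "q j i = exp (- (l * (e j ! i)^2))" for j i
  have eqG: "(\<Sum>j<card (P \<union> N). w j * (\<Prod>i<m. if a!i then p j i else q j i)) = G l a"
    if la: "length a = m" for a
  proof -
    have tj: "w j * (\<Prod>i<m. if a!i then p j i else q j i) = (if e j \<in> P then 1 else -1) * exp (- (l * sqd (e j) a))" for j
      unfolding w_def p_def q_def exp_sqd[OF la] by simp
    have "(\<Sum>j<card (P \<union> N). w j * (\<Prod>i<m. if a!i then p j i else q j i))
        = (\<Sum>j\<in>{0..<card (P \<union> N)}. (\<lambda>y. (if y \<in> P then 1 else -1) * exp (- (l * sqd y a))) (e j))"
      unfolding tj atLeast0LessThan by simp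
    also have "\<dots> = (\<Sum>y\<in>P \<union> N. (if y \<in> P then 1 else -1) * exp (- (l * sqd y a)))"
      by (rule sum.reindex_bij_betw[OF e])
    also have "\<dots> = (\<Sum>y\<in>P. (if y \<in> P then 1 else -1) * exp (- (l * sqd y a))) + (\<Sum>y\<in>N. (if y \<in> P then 1 else -1) * exp (- (l * sqd y a)))"
      by (rule sum.union_disjoint[OF fP fN disj])
    also have "(\<Sum>y\<in>P. (if y \<in> P then 1 else -1) * exp (- (l * sqd y a))) = (\<Sum>y\<in>P. exp (- (l * sqd y a)))"
      by (rule sum.cong) auto
    also have "(\<Sum>y\<in>N. (if y \<in> P then 1 else -1) * exp (- (l * sqd y a))) = (\<Sum>y\<in>N. - exp (- (l * sqd y a)))"
      by (rule sum.cong) (use disj in auto)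
    also have "(\<Sum>b\<in>P. exp (- (l * sqd b a))) + (\<Sum>y\<in>N. - exp (- (l * sqd y a))) = G l a"
      unfolding G_def sum_negf by simp
    finally show ?thesis .
  qed
  show ?thesis
  proof (rule exI[of _ w], rule exI[of _ p], rule exI[of _ q], intro conjI allI impI)
    show "0 < p j i" "0 < q j i" for j i unfolding p_def q_def by auto
  next
    fix a :: "bool list" assume la: "length a = m"
    show "(\<Sum>j<card (P \<union> N). w j * (\<Prod>i<m. if a!i then p j i else q j i)) \<noteq> 0"
      using l la eqG[OF la] by force
    show "f a \<longleftrightarrow> 0 < (\<Sum>j<card (P \<union> N). w j * (\<Prod>i<m. if a!i then p j i else q j i))"
      using l la eqG[OF la] by force
  qed
qed

lemma parity_Cons[simp]: "parity (b # a) = (if b then \<not> parity a else parity a)"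
  by (simp add: parity_def)

lemma parity_lower:
  fixes n :: nat and p q :: "nat \<Rightarrow> nat \<Rightarrow> real" and w :: "nat \<Rightarrow> real"
  assumes "\<forall>j i. 0 < p j i \<and> 0 < q j i"
    "\<forall>a. length a = n \<longrightarrow>
        (\<Sum>j<k. w j * (\<Prod>i<n. if a!i then p j i else q j i)) \<noteq> 0 \<and>
        (0 < (\<Sum>j<k. w j * (\<Prod>i<n. if a!i then p j i else q j i)) \<longleftrightarrow> parity a = s)"
  shows "n + 1 \<le> k"
  using assms
proof (induction n arbitrary: k w p q s)
  case (0 k w p q s)
  from 0(2) have "(\<Sum>j<k. w j * (\<Prod>i<(0::nat). if ([]::bool list)!i then p j i else q j i)) \<noteq> 0" by auto
  hence "k \<noteq> 0" by (cases k) auto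
  thus ?case by simp
next
  case (Suc n k w p q s)
  note pos = Suc.prems(1) and rep = Suc.prems(2)
  define Fn where "Fn a = (\<Sum>j<k. w j * (\<Prod>i<Suc n. if a!i then p j i else q j i))" for a
  have rep': "\<forall>a. length a = Suc n \<longrightarrow> Fn a \<noteq> 0 \<and> (0 < Fn a \<longleftrightarrow> parity a = s)"
    unfolding Fn_def using rep by blast
  have "Fn (replicate (Suc n) False) \<noteq> 0" using rep' by simp
  hence "k \<noteq> 0" unfolding Fn_def by (cases k) auto
  then obtain k' where k: "k = Suc k'" using not0_implies_Suc by blast
  define c where "c = p k' 0 / q k' 0"
  have c0: "0 < c" unfolding c_def using pos by simp
  define w' where "w' j = w j * (p j 0 - c * q j 0)" for j
  define p' where "p' j i = p j (Suc i)" for j i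
  define q' where "q' j i = q j (Suc i)" for j i
  have split: "Fn (b # a) = (\<Sum>j<k. w j * (if b then p j 0 else q j 0) * (\<Prod>i<n. if a!i then p' j i else q' j i))" for b a
    unfolding Fn_def p'_def q'_def prod.lessThan_Suc_shift by (simp del: prod.lessThan_Suc add: mult.assoc)
  have key: "Fn (True # a) - c * Fn (False # a) = (\<Sum>j<k'. w' j * (\<Prod>i<n. if a!i then p' j i else q' j i))" for a
  proof -
    have "Fn (True # a) - c * Fn (False # a) = (\<Sum>j<k. w j * (p j 0 - c * q j 0) * (\<Prod>i<n. if a!i then p' j i else q' j i))"
      unfolding split by (simp add: sum_distrib_left sum_subtractf[symmetric] algebra_simps)
    also have "\<dots> = (\<Sum>j<k'. w' j * (\<Prod>i<n. if a!i then p' j i else q' j i))"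
      using pos[rule_format, of k' 0] unfolding k by (simp add: w'_def c_def)
    finally show ?thesis .
  qed
  have "n + 1 \<le> k'"
  proof (rule Suc.IH[where k=k' and w=w' and p=p' and q=q' and s="\<not> s"])
    show "\<forall>j i. 0 < p' j i \<and> 0 < q' j i" using pos by (simp add: p'_def q'_def)
    show "\<forall>a. length a = n \<longrightarrow>
        (\<Sum>j<k'. w' j * (\<Prod>i<n. if a!i then p' j i else q' j i)) \<noteq> 0 \<and>
        (0 < (\<Sum>j<k'. w' j * (\<Prod>i<n. if a!i then p' j i else q' j i)) \<longleftrightarrow> parity a = (\<not> s))"
    proof (intro allI impI)
      fix a :: "bool list" assume la: "length a = n"
      have t0: "Fn (True # a) \<noteq> 0 \<and> (0 < Fn (True # a) \<longleftrightarrow> parity (True # a) = s)"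
        using rep'[rule_format, of "True # a"] la by simp
      have f0: "Fn (False # a) \<noteq> 0 \<and> (0 < Fn (False # a) \<longleftrightarrow> parity (False # a) = s)"
        using rep'[rule_format, of "False # a"] la by simp
      have t: "Fn (True # a) \<noteq> 0" "0 < Fn (True # a) \<longleftrightarrow> (\<not> parity a) = s"
        using t0 by simp_all
      have f: "Fn (False # a) \<noteq> 0" "0 < Fn (False # a) \<longleftrightarrow> parity a = s"
        using f0 by simp_all
      show "(\<Sum>j<k'. w' j * (\<Prod>i<n. if a!i then p' j i else q' j i)) \<noteq> 0 \<and>
        (0 < (\<Sum>j<k'. w' j * (\<Prod>i<n. if a!i then p' j i else q' j i)) \<longleftrightarrow> parity a = (\<not> s))"
      proof (cases "parity a = s")
        case True
        hence "Fn (True # a) < 0" "0 < Fn (False # a)" using t f by auto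
        hence "Fn (True # a) - c * Fn (False # a) < 0" using c0 by (smt (verit) mult_pos_pos)
        thus ?thesis using True key[of a] by auto
      next
        case False
        hence "0 < Fn (True # a)" "Fn (False # a) < 0" using t f by auto
        hence "0 < Fn (True # a) - c * Fn (False # a)" using c0 by (smt (verit) mult_pos_neg)
        thus ?thesis using False key[of a] by auto
      qed
    qed
  qed
  thus ?case unfolding k by simp
qed

theorem part_b: "n + 1 \<le> NN n parity"
proof (rule NN_ge)
  fix P N assume "finite P" "finite N" "nn_rep n parity P N"
  from exp_rep[OF this] obtain w p q where
    pq: "\<forall>j i. 0 < p j i \<and> 0 < q j i" and
    r: "\<forall>a. length a = n \<longrightarrow>
       (\<Sum>j<card (P \<union> N). w j * (\<Prod>i<n. if a!i then p j i else q j i)) \<noteq> (0::real) \<and>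
       (parity a \<longleftrightarrow> 0 < (\<Sum>j<card (P \<union> N). w j * (\<Prod>i<n. if a!i then p j i else q j i)))"
    by blast
  show "n + 1 \<le> card (P \<union> N)"
  proof (rule parity_lower[OF pq])
    show "\<forall>a. length a = n \<longrightarrow>
        (\<Sum>j<card (P \<union> N). w j * (\<Prod>i<n. if a!i then p j i else q j i)) \<noteq> 0 \<and>
        (0 < (\<Sum>j<card (P \<union> N). w j * (\<Prod>i<n. if a!i then p j i else q j i)) \<longleftrightarrow> parity a = True)"
      using r by auto
  qed
qed

definition ipk :: "nat \<Rightarrow> (nat \<Rightarrow> real) \<Rightarrow> (nat \<Rightarrow> real) \<Rightarrow> real" where
  "ipk k a b = (\<Sum>j<k. a j * b j)"
definition nsq :: "nat \<Rightarrow> (nat \<Rightarrow> real) \<Rightarrow> real" where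
  "nsq k a = ipk k a a"
definition app :: "nat \<Rightarrow> (nat \<Rightarrow> nat \<Rightarrow> real) \<Rightarrow> (nat \<Rightarrow> real) \<Rightarrow> nat \<Rightarrow> real" where
  "app k A u = (\<lambda>i. \<Sum>j<k. A i j * u j)"
definition mm :: "nat \<Rightarrow> (nat \<Rightarrow> nat \<Rightarrow> real) \<Rightarrow> (nat \<Rightarrow> nat \<Rightarrow> real) \<Rightarrow> nat \<Rightarrow> nat \<Rightarrow> real" where
  "mm k A B = (\<lambda>i j. \<Sum>l<k. A i l * B l j)"
definition trm :: "(nat \<Rightarrow> nat \<Rightarrow> real) \<Rightarrow> nat \<Rightarrow> nat \<Rightarrow> real" where
  "trm A = (\<lambda>i j. A j i)"
definition dt :: "nat \<Rightarrow> (nat \<Rightarrow> nat \<Rightarrow> real) \<Rightarrow> real" where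
  "dt k A = det (mat k k (\<lambda>(i,j). A i j))"
definition idm :: "nat \<Rightarrow> nat \<Rightarrow> real" where
  "idm = (\<lambda>i j. if i = j then 1 else 0)"

lemma CS_sum:
  fixes a b :: "'a \<Rightarrow> real"
  shows "(\<Sum>i\<in>I. a i * b i)\<^sup>2 \<le> (\<Sum>i\<in>I. (a i)\<^sup>2) * (\<Sum>i\<in>I. (b i)\<^sup>2)"
proof (cases "(\<Sum>i\<in>I. (b i)\<^sup>2) > 0")
  case False
  hence z: "(\<Sum>i\<in>I. (b i)\<^sup>2) = 0" by (meson sum_nonneg zero_le_power2 not_less antisym)
  show ?thesis
  proof (cases "finite I")
    case True
    hence "\<forall>i\<in>I. (b i)\<^sup>2 = 0" using z sum_nonneg_eq_0_iff[of I "\<lambda>i. (b i)\<^sup>2"] by simp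
    hence "(\<Sum>i\<in>I. a i * b i) = 0" by simp
    thus ?thesis by (simp add: mult_nonneg_nonneg sum_nonneg)
  qed simp
next
  case True
  define r where "r = (\<Sum>i\<in>I. a i * b i) / (\<Sum>i\<in>I. (b i)\<^sup>2)"
  have "0 \<le> (\<Sum>i\<in>I. (a i - r * b i)\<^sup>2)"
    by (simp add: sum_nonneg)
  also have "\<dots> = (\<Sum>i\<in>I. (a i)\<^sup>2) - 2 * r * (\<Sum>i\<in>I. a i * b i) + r\<^sup>2 * (\<Sum>i\<in>I. (b i)\<^sup>2)"
    by (simp add: algebra_simps power2_eq_square sum_distrib_left flip: sum.distrib)
  also have "\<dots> = (\<Sum>i\<in>I. (a i)\<^sup>2) - ((\<Sum>i\<in>I. a i * b i))\<^sup>2 / (\<Sum>i\<in>I. (b i)\<^sup>2)"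
    using True by (simp add: r_def power2_eq_square)
  finally have "((\<Sum>i\<in>I. a i * b i))\<^sup>2 / (\<Sum>i\<in>I. (b i)\<^sup>2) \<le> (\<Sum>i\<in>I. (a i)\<^sup>2)"
    by simp
  thus ?thesis by (simp add: pos_divide_le_eq True)
qed

lemma ipk_comm: "ipk k a b = ipk k b a"
  unfolding ipk_def by (simp add: mult.commute)

lemma nsq_nonneg: "0 \<le> nsq k a"
  unfolding nsq_def ipk_def by (simp add: sum_nonneg)

lemma nsq_eq: "nsq k a = (\<Sum>j<k. (a j)\<^sup>2)"
  unfolding nsq_def ipk_def by (simp add: power2_eq_square)

lemma ipk_CS: "(ipk k a b)\<^sup>2 \<le> nsq k a * nsq k b"
  unfolding ipk_def nsq_eq by (rule CS_sum)

lemma nsq_zero: "nsq k a = 0 \<Longrightarrow> j < k \<Longrightarrow> a j = 0"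
  unfolding nsq_eq using sum_nonneg_eq_0_iff[of "{..<k}" "\<lambda>j. (a j)\<^sup>2"] by simp

lemma ipk_zero: "nsq k a = 0 \<Longrightarrow> ipk k a b = 0"
  unfolding ipk_def using nsq_zero[of k a] by simp

lemma ipk_scale: "ipk k (\<lambda>j. c * a j) b = c * ipk k a b"
  unfolding ipk_def by (simp add: sum_distrib_left algebra_simps)

lemma ipk_scale2: "ipk k a (\<lambda>j. c * b j) = c * ipk k a b"
  unfolding ipk_def by (simp add: sum_distrib_left algebra_simps)

lemma nsq_scale: "nsq k (\<lambda>j. c * a j) = c\<^sup>2 * nsq k a"
  unfolding nsq_def ipk_def by (simp add: sum_distrib_left algebra_simps power2_eq_square)

lemma app_mm: "app k (mm k A B) u = app k A (app k B u)"
proof (rule ext)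
  fix i
  have "(\<Sum>j<k. (\<Sum>l<k. A i l * B l j) * u j) = (\<Sum>j<k. \<Sum>l<k. A i l * (B l j * u j))"
    by (simp add: sum_distrib_right mult.assoc)
  also have "\<dots> = (\<Sum>l<k. \<Sum>j<k. A i l * (B l j * u j))" by (rule sum.swap)
  also have "\<dots> = (\<Sum>l<k. A i l * (\<Sum>j<k. B l j * u j))" by (simp add: sum_distrib_left)
  finally show "app k (mm k A B) u i = app k A (app k B u) i" unfolding app_def mm_def .
qed

lemma mat_mm: "mat k k (\<lambda>(i,j). mm k A B i j) = mat k k (\<lambda>(i,j). A i j) * mat k k (\<lambda>(i,j). B i j)"
  by (rule eq_matI) (auto simp: mm_def scalar_prod_def atLeast0LessThan intro!: sum.cong)

lemma dt_mm: "dt k (mm k A B) = dt k A * dt k B"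
  unfolding dt_def mat_mm by (rule det_mult) auto

lemma dt_trm: "dt k (trm A) = dt k A"
proof -
  have "mat k k (\<lambda>(i,j). trm A i j) = transpose_mat (mat k k (\<lambda>(i,j). A i j))"
    by (rule eq_matI) (auto simp: trm_def)
  thus ?thesis unfolding dt_def using det_transpose[of "mat k k (\<lambda>(i,j). A i j)" k] by simp
qed

lemma dt_idm: "dt k idm = 1"
proof -
  have "mat k k (\<lambda>(i,j). idm i j) = 1\<^sub>m k"
    by (rule eq_matI) (auto simp: idm_def)
  thus ?thesis unfolding dt_def by simp
qed

lemma dt_cong: "(\<And>i j. i < k \<Longrightarrow> j < k \<Longrightarrow> A i j = B i j) \<Longrightarrow> dt k A = dt k B"
proof -
  assume h: "\<And>i j. i < k \<Longrightarrow> j < k \<Longrightarrow> A i j = B i j"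
  have "mat k k (\<lambda>(i,j). A i j) = mat k k (\<lambda>(i,j). B i j)"
    by (rule eq_matI) (auto simp: h)
  thus ?thesis unfolding dt_def by simp
qed

lemma abs_le_sqrt_nsq: "j < k \<Longrightarrow> \<bar>a j\<bar> \<le> sqrt (nsq k a)"
proof -
  assume j: "j < k"
  have "(a j)\<^sup>2 \<le> nsq k a"
    unfolding nsq_eq using j by (intro member_le_sum) auto
  hence "sqrt ((a j)\<^sup>2) \<le> sqrt (nsq k a)" by (rule real_sqrt_le_mono)
  thus ?thesis by simp
qed

definition permc :: "nat \<Rightarrow> real" where
  "permc k = real (card {p. p permutes {0..<k}})"

lemma permc_pos: "0 < permc k"
  unfolding permc_def using card_permutations[of "{0..<k}" k] by simp

lemma dt_bound: "\<bar>dt k A\<bar> \<le> permc k * (\<Prod>i<k. sqrt (nsq k (A i)))"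
proof -
  have "dt k A = (\<Sum>p | p permutes {0..<k}. of_int (sign p) * (\<Prod>i = 0..<k. mat k k (\<lambda>(i,j). A i j) $$ (i, p i)))"
    unfolding dt_def by (rule det_def') simp
  also have "\<dots> = (\<Sum>p | p permutes {0..<k}. of_int (sign p) * (\<Prod>i<k. A i (p i)))"
  proof (rule sum.cong[OF refl])
    fix p assume "p \<in> {p. p permutes {0..<k}}"
    hence "\<And>i. i < k \<Longrightarrow> p i < k" using permutes_in_image[of p "{0..<k}"] by auto
    thus "of_int (sign p) * (\<Prod>i = 0..<k. mat k k (\<lambda>(i,j). A i j) $$ (i, p i)) = of_int (sign p) * (\<Prod>i<k. A i (p i))"
      by (auto simp: atLeast0LessThan intro!: prod.cong)
  qed
  finally have e: "dt k A = (\<Sum>p | p permutes {0..<k}. of_int (sign p) * (\<Prod>i<k. A i (p i)))" .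
  have "\<bar>dt k A\<bar> \<le> (\<Sum>p | p permutes {0..<k}. \<bar>of_int (sign p) * (\<Prod>i<k. A i (p i))\<bar>)"
    unfolding e by (rule sum_abs)
  also have "\<dots> \<le> (\<Sum>p | p permutes {0..<k}. (\<Prod>i<k. sqrt (nsq k (A i))))"
  proof (rule sum_mono)
    fix p assume "p \<in> {p. p permutes {0..<k}}"
    hence pk: "\<And>i. i < k \<Longrightarrow> p i < k" using permutes_in_image[of p "{0..<k}"] by auto
    have "\<bar>of_int (sign p) * (\<Prod>i<k. A i (p i))\<bar> = (\<Prod>i<k. \<bar>A i (p i)\<bar>)"
      by (simp add: abs_mult sign_def abs_prod)
    also have "\<dots> \<le> (\<Prod>i<k. sqrt (nsq k (A i)))"
      by (rule prod_mono) (auto intro: abs_le_sqrt_nsq pk)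
    finally show "\<bar>of_int (sign p) * (\<Prod>i<k. A i (p i))\<bar> \<le> (\<Prod>i<k. sqrt (nsq k (A i)))" .
  qed
  also have "\<dots> = permc k * (\<Prod>i<k. sqrt (nsq k (A i)))"
    by (simp add: permc_def)
  finally show ?thesis .
qed

lemma sum_idm_left: "j < k \<Longrightarrow> (\<Sum>l<k. idm j l * f l) = f j"
proof -
  assume j: "j < k"
  have "(\<Sum>l<k. idm j l * f l) = (\<Sum>l<k. if j = l then f l else 0)"
    by (rule sum.cong) (auto simp: idm_def)
  also have "\<dots> = f j" using j by simp
  finally show ?thesis .
qed

lemma sum_idm_right: "j < k \<Longrightarrow> (\<Sum>l<k. f l * idm l j) = f j"
proof -
  assume j: "j < k"
  have "(\<Sum>l<k. f l * idm l j) = (\<Sum>l<k. idm j l * f l)"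
    by (rule sum.cong) (auto simp: idm_def)
  thus ?thesis using sum_idm_left[OF j] by simp
qed

lemma idm_sym: "idm i j = idm j i" by (auto simp: idm_def)

lemma orth_exists:
  assumes k: "0 < k" and e: "nsq k e = 1"
  shows "\<exists>Q. (\<forall>i<k. \<forall>j<k. (\<Sum>l<k. Q l i * Q l j) = idm i j) \<and> (\<forall>j<k. Q 0 j = e j)"
proof -
  have split: "nsq k f = (f 0)\<^sup>2 + (\<Sum>j\<in>{..<k} - {0}. (f j)\<^sup>2)" for f
    unfolding nsq_eq using k by (simp add: sum.remove[of "{..<k}" 0])
  have e0le: "(e 0)\<^sup>2 \<le> 1"
    using split[of e] e by (smt (verit) sum_nonneg zero_le_power2)
  show ?thesis
  proof (cases "e 0 = 1")
    case True
    have rest: "(\<Sum>j\<in>{..<k} - {0}. (e j)\<^sup>2) = 0" using split[of e] e True by simp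
    have ez: "e j = 0" if "j < k" "j \<noteq> 0" for j
      using rest sum_nonneg_eq_0_iff[of "{..<k} - {0}" "\<lambda>j. (e j)\<^sup>2"] that by simp
    show ?thesis
    proof (intro exI[of _ idm] conjI allI impI)
      fix i j assume "i < k" "j < k"
      thus "(\<Sum>l<k. idm l i * idm l j) = idm i j" using sum_idm_left[of i k "\<lambda>l. idm l j"] by (simp add: idm_sym)
    next
      fix j assume "j < k"
      thus "idm 0 j = e j" using True ez[of j] by (auto simp: idm_def)
    qed
  next
    case False
    have e0lt: "e 0 < 1" using False e0le by (smt (verit) power2_eq_square mult_le_cancel_left1)
    define w where "w j = e j - idm 0 j" for j
    define s where "s = nsq k w"
    have "s = nsq k e - 2 * (\<Sum>j<k. e j * idm 0 j) + (\<Sum>j<k. idm 0 j * idm 0 j)"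
      unfolding s_def nsq_eq w_def by (simp add: power2_diff sum.distrib sum_subtractf sum_distrib_left power2_eq_square algebra_simps)
    also have "\<dots> = 2 - 2 * e 0"
      using e k sum_idm_right[of 0 k e] sum_idm_left[of 0 k "idm 0"] by (simp add: idm_def)
    finally have s: "s = 2 - 2 * e 0" .
    have spos: "0 < s" using s e0lt by simp
    have w0: "w 0 = e 0 - 1" by (simp add: w_def idm_def)
    define Q where "Q i j = idm i j - 2 * w i * w j / s" for i j
    show ?thesis
    proof (intro exI[of _ Q] conjI allI impI)
      fix i j assume i: "i < k" and j: "j < k"
      have "(\<Sum>l<k. Q l i * Q l j) = (\<Sum>l<k. idm l i * idm l j) - 2 * w j / s * (\<Sum>l<k. idm l i * w l)
            - 2 * w i / s * (\<Sum>l<k. w l * idm l j) + 4 * w i * w j / s\<^sup>2 * (\<Sum>l<k. w l * w l)"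
        unfolding Q_def by (simp add: algebra_simps sum.distrib sum_subtractf sum_distrib_left power2_eq_square sum_divide_distrib)
      also have "(\<Sum>l<k. idm l i * idm l j) = idm i j"
      proof -
        have "(\<Sum>l<k. idm l i * idm l j) = (\<Sum>l<k. idm i l * idm l j)"
          by (rule sum.cong) (auto simp: idm_def)
        also have "\<dots> = idm i j" by (rule sum_idm_left[OF i])
        finally show ?thesis .
      qed
      also have "(\<Sum>l<k. idm l i * w l) = w i"
        using sum_idm_left[OF i, of w] by (simp add: idm_sym)
      also have "(\<Sum>l<k. w l * idm l j) = w j"
        using sum_idm_right[OF j, of w] .
      also have "(\<Sum>l<k. w l * w l) = s"
        unfolding s_def nsq_def ipk_def ..
      finally show "(\<Sum>l<k. Q l i * Q l j) = idm i j"
        using spos by (simp add: power2_eq_square field_simps)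
    next
      fix j assume j: "j < k"
      have "Q 0 j = idm 0 j - 2 * (e 0 - 1) * w j / (2 - 2 * e 0)"
        unfolding Q_def w0 s ..
      also have "\<dots> = idm 0 j + w j" using e0lt by (simp add: field_simps)
      also have "\<dots> = e j" by (simp add: w_def)
      finally show "Q 0 j = e j" .
    qed
  qed
qed

lemma orth_nsq:
  assumes o: "\<forall>i<k. \<forall>j<k. (\<Sum>l<k. Q l i * Q l j) = idm i j"
  shows "nsq k (app k Q w) = nsq k w"
proof -
  have "nsq k (app k Q w) = (\<Sum>i<k. (\<Sum>j<k. Q i j * w j) * (\<Sum>l<k. Q i l * w l))"
    unfolding nsq_def ipk_def app_def ..
  also have "\<dots> = (\<Sum>i<k. \<Sum>j<k. \<Sum>l<k. (Q i j * w j) * (Q i l * w l))"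
    by (simp add: sum_product)
  also have "\<dots> = (\<Sum>j<k. \<Sum>i<k. \<Sum>l<k. (Q i j * w j) * (Q i l * w l))"
    by (rule sum.swap)
  also have "\<dots> = (\<Sum>j<k. \<Sum>l<k. \<Sum>i<k. (Q i j * w j) * (Q i l * w l))"
    by (rule sum.cong[OF refl], rule sum.swap)
  also have "\<dots> = (\<Sum>j<k. \<Sum>l<k. w j * w l * (\<Sum>i<k. Q i j * Q i l))"
    by (simp add: sum_distrib_left algebra_simps)
  also have "\<dots> = (\<Sum>j<k. \<Sum>l<k. w j * (idm j l * w l))"
    using o by (intro sum.cong refl) (auto simp: algebra_simps)
  also have "\<dots> = (\<Sum>j<k. w j * w j)"
    by (intro sum.cong refl) (simp add: sum_distrib_left[symmetric] sum_idm_left)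
  also have "\<dots> = nsq k w" unfolding nsq_def ipk_def ..
  finally show ?thesis .
qed

lemma orth_dt:
  assumes o: "\<forall>i<k. \<forall>j<k. (\<Sum>l<k. Q l i * Q l j) = idm i j"
  shows "\<bar>dt k Q\<bar> = 1"
proof -
  have "dt k (mm k (trm Q) Q) = dt k idm"
    by (rule dt_cong) (use o in \<open>auto simp: mm_def trm_def\<close>)
  hence "dt k Q * dt k Q = 1" by (simp add: dt_mm dt_trm dt_idm)
  hence "(dt k Q)\<^sup>2 = 1" by (simp add: power2_eq_square)
  hence "dt k Q = 1 \<or> dt k Q = -1" by (simp add: power2_eq_1_iff)
  thus ?thesis by auto
qed

definition dg :: "real \<Rightarrow> nat \<Rightarrow> nat \<Rightarrow> real" where
  "dg t = (\<lambda>i j. if i = j then (if i = 0 then 1 + t else 1) else 0)"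

lemma dt_dg: "0 < k \<Longrightarrow> dt k (dg t) = 1 + t"
proof -
  assume k: "0 < k"
  have "mat k k (\<lambda>(i,j). dg t i j) = multrow_mat k 0 (1 + t)"
    by (rule eq_matI) (auto simp: multrow_mat_def dg_def)
  thus ?thesis unfolding dt_def using det_multrow_mat[OF k] by simp
qed

lemma app_dg: "i < k \<Longrightarrow> app k (dg t) z i = (if i = 0 then 1 + t else 1) * z i"
proof -
  assume i: "i < k"
  have "app k (dg t) z i = (\<Sum>j<k. if i = j then (if i = 0 then 1 + t else 1) * z j else 0)"
    unfolding app_def dg_def by (rule sum.cong) auto
  also have "\<dots> = (if i = 0 then 1 + t else 1) * z i" using i by simp
  finally show ?thesis .
qed

lemma nsq_dg: "0 < k \<Longrightarrow> nsq k (app k (dg t) z) = nsq k z + ((1 + t)\<^sup>2 - 1) * (z 0)\<^sup>2"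
proof -
  assume k: "0 < k"
  then obtain k' where k': "k = Suc k'" using not0_implies_Suc by blast
  have "nsq k (app k (dg t) z) = (\<Sum>i<k. ((if i = 0 then 1 + t else 1) * z i)\<^sup>2)"
    unfolding nsq_eq by (rule sum.cong) (auto simp: app_dg)
  also have "\<dots> = ((1 + t) * z 0)\<^sup>2 + (\<Sum>i<k'. (z (Suc i))\<^sup>2)"
    unfolding k' by (simp add: sum.lessThan_Suc_shift del: sum.lessThan_Suc)
  also have "nsq k z = (z 0)\<^sup>2 + (\<Sum>i<k'. (z (Suc i))\<^sup>2)"
    unfolding nsq_eq k' by (simp add: sum.lessThan_Suc_shift del: sum.lessThan_Suc)
  ultimately show ?thesis by (simp add: power2_eq_square algebra_simps)
qed

definition win :: "nat \<Rightarrow> nat \<Rightarrow> nat \<Rightarrow> nat" where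
  "win m t i = (t + i) mod m"

lemma rot1: "(\<Sum>t<Suc n. g ((t + 1) mod Suc n)) = (\<Sum>t<Suc n. (g t :: real))"
proof -
  have "(\<Sum>t<Suc n. g ((t + 1) mod Suc n)) = (\<Sum>t<n. g ((t + 1) mod Suc n)) + g 0"
    by simp
  also have "(\<Sum>t<n. g ((t + 1) mod Suc n)) = (\<Sum>t<n. g (Suc t))"
    by (rule sum.cong) auto
  also have "(\<Sum>t<n. g (Suc t)) + g 0 = (\<Sum>t<Suc n. g t)"
    by (simp add: sum.lessThan_Suc_shift del: sum.lessThan_Suc)
  finally show ?thesis .
qed

lemma rot: "0 < (m::nat) \<Longrightarrow> (\<Sum>t<m. h ((t + i) mod m)) = (\<Sum>t<m. (h t :: real))"
proof (induction i)
  case 0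
  thus ?case by (intro sum.cong) auto
next
  case (Suc i)
  then obtain n where n: "m = Suc n" using not0_implies_Suc by blast
  have "(\<Sum>t<m. h ((t + Suc i) mod m)) = (\<Sum>t<m. (\<lambda>x. h ((x + i) mod m)) ((t + 1) mod m))"
    by (intro sum.cong refl) (simp add: mod_add_left_eq)
  also have "\<dots> = (\<Sum>t<m. h ((t + i) mod m))"
    unfolding n by (rule rot1)
  also have "\<dots> = (\<Sum>t<m. h t)" using Suc by simp
  finally show ?case .
qed

lemma window_sum: "0 < m \<Longrightarrow> (\<Sum>t<m. \<Sum>i<k. h (win m t i)) = real k * (\<Sum>x<m. (h x :: real))"
proof -
  assume m: "0 < m"
  have "(\<Sum>t<m. \<Sum>i<k. h (win m t i)) = (\<Sum>i<k. \<Sum>t<m. h ((t + i) mod m))"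
    unfolding win_def by (rule sum.swap)
  also have "\<dots> = (\<Sum>i<k. \<Sum>x<m. h x)" using rot[OF m] by simp
  finally show ?thesis by simp
qed

definition gpos :: "nat \<Rightarrow> nat \<Rightarrow> (nat \<Rightarrow> nat \<Rightarrow> real) \<Rightarrow> bool" where
  "gpos k m u \<longleftrightarrow> (\<forall>t<m. dt k (\<lambda>i j. u (win m t i) j) \<noteq> 0)"

definition Psi :: "nat \<Rightarrow> nat \<Rightarrow> (nat \<Rightarrow> nat \<Rightarrow> real) \<Rightarrow> (nat \<Rightarrow> nat \<Rightarrow> real) \<Rightarrow> real" where
  "Psi k m u A = (\<Sum>x<m. ln (nsq k (app k A (u x)))) - 2 * real m / real k * ln \<bar>dt k A\<bar>"

lemma W_eq: "(\<lambda>i j. app k A (u (win m t i)) j) = mm k (\<lambda>i j. u (win m t i) j) (trm A)"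
  unfolding app_def mm_def trm_def by (intro ext sum.cong) (auto simp: mult.commute)

lemma dt_W: "dt k (\<lambda>i j. app k A (u (win m t i)) j) = dt k (\<lambda>i j. u (win m t i) j) * dt k A"
  unfolding W_eq dt_mm dt_trm ..

lemma nsq_pos:
  assumes gp: "gpos k m u" and A: "dt k A \<noteq> 0" and x: "x < m" and k: "0 < k"
  shows "0 < nsq k (app k A (u x))"
proof (rule ccontr)
  assume "\<not> 0 < nsq k (app k A (u x))"
  hence z: "nsq k (app k A (u x)) = 0" using nsq_nonneg[of k "app k A (u x)"] by linarith
  have nz: "dt k (\<lambda>i j. app k A (u (win m x i)) j) \<noteq> 0"
    using gp x A unfolding dt_W gpos_def by simp
  have w0: "win m x 0 = x" using x by (simp add: win_def)
  have P0: "(\<Prod>i<k. sqrt (nsq k (app k A (u (win m x i))))) = 0"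
  proof (rule prod_zero)
    show "\<exists>a\<in>{..<k}. sqrt (nsq k (app k A (u (win m x a)))) = 0"
      using k w0 z by (intro bexI[of _ 0]) auto
  qed simp
  have "\<bar>dt k (\<lambda>i j. app k A (u (win m x i)) j)\<bar> \<le> permc k * (\<Prod>i<k. sqrt (nsq k (app k A (u (win m x i)))))"
    by (rule dt_bound)
  also have "\<dots> = 0" unfolding P0 by simp
  finally have "\<bar>dt k (\<lambda>i j. app k A (u (win m x i)) j)\<bar> \<le> 0" .
  thus False using nz by simp
qed

lemma psi_lower:
  assumes k: "0 < k" and m: "0 < m" and gp: "gpos k m u"
  shows "\<exists>C. \<forall>A. dt k A \<noteq> 0 \<longrightarrow> C \<le> Psi k m u A"
proof -
  define S where "S = (\<Sum>t<m. ln \<bar>dt k (\<lambda>i j. u (win m t i) j)\<bar>)"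
  define P where "P = ln (permc k)"
  define C where "C = 2 / real k * (S - real m * P)"
  show ?thesis
  proof (intro exI[of _ C] allI impI)
    fix A assume A: "dt k A \<noteq> 0"
    have pos: "0 < nsq k (app k A (u x))" if "x < m" for x using nsq_pos[OF gp A that k] .
    have step: "ln \<bar>dt k (\<lambda>i j. u (win m t i) j)\<bar> + ln \<bar>dt k A\<bar> \<le> P + (\<Sum>i<k. ln (nsq k (app k A (u (win m t i)))) / 2)"
      if t: "t < m" for t
    proof -
      have nz: "dt k (\<lambda>i j. u (win m t i) j) \<noteq> 0" using gp t unfolding gpos_def by blast
      have wpos: "0 < nsq k (app k A (u (win m t i)))" for i
        using pos m by (simp add: win_def)
      have wnz: "nsq k (app k A (u (win m t i))) \<noteq> 0" for i using wpos[of i] by simp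
      have pp: "0 < (\<Prod>i<k. sqrt (nsq k (app k A (u (win m t i)))))"
        by (rule prod_pos) (use wpos in auto)
      have "ln \<bar>dt k (\<lambda>i j. u (win m t i) j)\<bar> + ln \<bar>dt k A\<bar> = ln \<bar>dt k (\<lambda>i j. app k A (u (win m t i)) j)\<bar>"
        using nz A unfolding dt_W by (simp add: abs_mult ln_mult)
      also have "\<dots> \<le> ln (permc k * (\<Prod>i<k. sqrt (nsq k (app k A (u (win m t i))))))"
      proof (rule ln_mono)
        show "0 < \<bar>dt k (\<lambda>i j. app k A (u (win m t i)) j)\<bar>" using nz A unfolding dt_W by simp
        show "\<bar>dt k (\<lambda>i j. app k A (u (win m t i)) j)\<bar> \<le> permc k * (\<Prod>i<k. sqrt (nsq k (app k A (u (win m t i)))))"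
          using dt_bound[of k "\<lambda>i j. app k A (u (win m t i)) j"] by simp
      qed
      also have "\<dots> = P + (\<Sum>i<k. ln (sqrt (nsq k (app k A (u (win m t i))))))"
        using pp permc_pos[of k] wpos wnz unfolding P_def by (simp add: ln_mult ln_prod)
      also have "(\<Sum>i<k. ln (sqrt (nsq k (app k A (u (win m t i)))))) = (\<Sum>i<k. ln (nsq k (app k A (u (win m t i)))) / 2)"
        by (rule sum.cong[OF refl]) (rule ln_sqrt[OF less_imp_le[OF wpos]])
      finally show ?thesis .
    qed
    have "(\<Sum>t<m. ln \<bar>dt k (\<lambda>i j. u (win m t i) j)\<bar> + ln \<bar>dt k A\<bar>) \<le> (\<Sum>t<m. P + (\<Sum>i<k. ln (nsq k (app k A (u (win m t i)))) / 2))"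
      by (rule sum_mono) (use step in auto)
    hence H1: "S + real m * ln \<bar>dt k A\<bar> \<le> real m * P + (\<Sum>t<m. \<Sum>i<k. ln (nsq k (app k A (u (win m t i)))) / 2)"
      unfolding S_def by (simp add: sum.distrib)
    have "(\<Sum>t<m. \<Sum>i<k. ln (nsq k (app k A (u (win m t i)))) / 2) = real k * (\<Sum>x<m. ln (nsq k (app k A (u x))) / 2)"
      by (rule window_sum[OF m])
    also have "\<dots> = real k / 2 * (\<Sum>x<m. ln (nsq k (app k A (u x))))"
      by (simp add: sum_divide_distrib[symmetric])
    finally have H: "S + real m * ln \<bar>dt k A\<bar> \<le> real m * P + real k / 2 * (\<Sum>x<m. ln (nsq k (app k A (u x))))"
      using H1 by simp
    define X where "X = (\<Sum>x<m. ln (nsq k (app k A (u x))))"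
    define L where "L = ln \<bar>dt k A\<bar>"
    have H': "2 * S + 2 * real m * L \<le> 2 * real m * P + real k * X"
      using H unfolding X_def L_def by simp
    have "C = (2 * S - 2 * real m * P) / real k" unfolding C_def by (simp add: field_simps)
    also have "\<dots> \<le> (real k * X - 2 * real m * L) / real k"
      using H' k by (intro divide_right_mono) auto
    also have "\<dots> = Psi k m u A"
      unfolding Psi_def X_def L_def using k by (simp add: field_simps)
    finally show "C \<le> Psi k m u A" .
  qed
qed

lemma stretch:
  assumes k: "0 < k" and m: "0 < m" and gp: "gpos k m u" and A: "dt k A \<noteq> 0"
    and e: "nsq k e = 1" and ep: "0 < \<epsilon>"
    and beta: "(\<Sum>x<m. (ipk k e (app k A (u x)))\<^sup>2 / nsq k (app k A (u x))) \<le> real m / real k - \<epsilon>"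
  shows "\<exists>A'. dt k A' \<noteq> 0 \<and> Psi k m u A' \<le> Psi k m u A - min 1 (\<epsilon> / (3 * real m)) * \<epsilon>"
proof -
  define t where "t = min 1 (\<epsilon> / (3 * real m))"
  have t0: "0 < t" "t \<le> 1" "t \<le> \<epsilon> / (3 * real m)" using ep m by (auto simp: t_def)
  obtain Q where Qo: "\<forall>i<k. \<forall>j<k. (\<Sum>l<k. Q l i * Q l j) = idm i j" and Q0: "\<forall>j<k. Q 0 j = e j"
    using orth_exists[OF k e] by blast
  define A' where "A' = mm k (dg t) (mm k Q A)"
  have dtA': "dt k A' = (1 + t) * (dt k Q * dt k A)" unfolding A'_def dt_mm dt_dg[OF k] ..
  have absA': "\<bar>dt k A'\<bar> = (1 + t) * \<bar>dt k A\<bar>" using orth_dt[OF Qo] t0 by (simp add: dtA' abs_mult)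
  have A'nz: "dt k A' \<noteq> 0" using absA' A t0 by auto
  define N where "N x = nsq k (app k A (u x))" for x
  define c where "c x = (ipk k e (app k A (u x)))\<^sup>2 / N x" for x
  have Npos: "0 < N x" if "x < m" for x using nsq_pos[OF gp A that k] by (simp add: N_def)
  have c0: "0 \<le> c x" for x by (simp add: c_def N_def nsq_nonneg)
  have nsqA': "nsq k (app k A' (u x)) = N x * (1 + (2 * t + t\<^sup>2) * c x)" if x: "x < m" for x
  proof -
    have "app k A' (u x) = app k (dg t) (app k Q (app k A (u x)))" unfolding A'_def app_mm ..
    hence "nsq k (app k A' (u x)) = nsq k (app k Q (app k A (u x))) + ((1 + t)\<^sup>2 - 1) * (app k Q (app k A (u x)) 0)\<^sup>2"
      using nsq_dg[OF k] by simp
    also have "nsq k (app k Q (app k A (u x))) = N x" using orth_nsq[OF Qo] by (simp add: N_def)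
    also have "app k Q (app k A (u x)) 0 = ipk k e (app k A (u x))"
      unfolding app_def ipk_def using Q0 by (intro sum.cong) auto
    finally show ?thesis using Npos[OF x] by (simp add: c_def field_simps power2_eq_square)
  qed
  have lnA': "ln (nsq k (app k A' (u x))) \<le> ln (N x) + (2 * t + t\<^sup>2) * c x" if x: "x < m" for x
  proof -
    have pos1: "0 < 1 + (2 * t + t\<^sup>2) * c x" using c0[of x] t0 by (simp add: add_pos_nonneg)
    have "ln (nsq k (app k A' (u x))) = ln (N x) + ln (1 + (2 * t + t\<^sup>2) * c x)"
      using nsqA'[OF x] Npos[OF x] pos1 by (simp add: ln_mult)
    also have "ln (1 + (2 * t + t\<^sup>2) * c x) \<le> (2 * t + t\<^sup>2) * c x"
      by (rule ln_add_one_self_le_self) (use c0 t0 in simp)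
    finally show ?thesis by simp
  qed
  define B where "B = (\<Sum>x<m. c x)"
  have sumA': "(\<Sum>x<m. ln (nsq k (app k A' (u x)))) \<le> (\<Sum>x<m. ln (N x)) + (2 * t + t\<^sup>2) * B"
  proof -
    have "(\<Sum>x<m. ln (nsq k (app k A' (u x)))) \<le> (\<Sum>x<m. ln (N x) + (2 * t + t\<^sup>2) * c x)"
      by (rule sum_mono) (use lnA' in auto)
    thus ?thesis by (simp add: sum.distrib sum_distrib_left B_def)
  qed
  have lndet: "ln \<bar>dt k A'\<bar> = ln (1 + t) + ln \<bar>dt k A\<bar>" using absA' A t0 by (simp add: ln_mult)
  have ln1t: "t - t\<^sup>2 \<le> ln (1 + t)" using ln_one_plus_pos_lower_bound[of t] t0 by simp
  have betac: "B \<le> real m / real k - \<epsilon>" using beta by (simp add: B_def c_def N_def)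
  have key: "(2 * t + t\<^sup>2) * B - 2 * real m / real k * (t - t\<^sup>2) \<le> - (t * \<epsilon>)"
  proof -
    define M where "M = real m / real k"
    have tt: "0 \<le> 2 * t + t\<^sup>2" using t0 by simp
    have M0: "0 \<le> M" unfolding M_def by simp
    have mk: "M \<le> real m" unfolding M_def using k by (simp add: divide_le_eq mult_le_cancel_left1 )
    have t3: "3 * real m * t \<le> \<epsilon>" using t0 m by (simp add: field_simps)
    have "(2 * t + t\<^sup>2) * B \<le> (2 * t + t\<^sup>2) * (M - \<epsilon>)"
      using betac tt unfolding M_def by (rule mult_left_mono)
    also have "(2 * t + t\<^sup>2) * (M - \<epsilon>) = 2 * M * (t - t\<^sup>2) + 3 * t\<^sup>2 * M - 2 * t * \<epsilon> - t\<^sup>2 * \<epsilon>"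
      by (simp add: algebra_simps power2_eq_square)
    finally have h1: "(2 * t + t\<^sup>2) * B - 2 * M * (t - t\<^sup>2) \<le> 3 * t\<^sup>2 * M - 2 * t * \<epsilon> - t\<^sup>2 * \<epsilon>" by simp
    have h2: "3 * t\<^sup>2 * M \<le> 3 * t\<^sup>2 * real m" using mk by (simp add: mult_left_mono)
    have h3: "3 * t\<^sup>2 * real m \<le> t * \<epsilon>"
      using mult_left_mono[OF t3, of t] t0 by (simp add: power2_eq_square algebra_simps)
    have h4: "0 \<le> t\<^sup>2 * \<epsilon>" using ep by simp
    have "2 * real m / real k = 2 * M" unfolding M_def by simp
    hence "2 * real m / real k * (t - t\<^sup>2) = 2 * M * (t - t\<^sup>2)" by simp
    thus ?thesis using h1 h2 h3 h4 by linarith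
  qed
  define K2 where "K2 = 2 * real m / real k"
  have mk0: "0 \<le> K2" unfolding K2_def by simp
  have PsiA: "Psi k m u A = (\<Sum>x<m. ln (N x)) - K2 * ln \<bar>dt k A\<bar>"
    unfolding Psi_def N_def K2_def ..
  have PsiA': "Psi k m u A' = (\<Sum>x<m. ln (nsq k (app k A' (u x)))) - K2 * ln \<bar>dt k A'\<bar>"
    unfolding Psi_def K2_def ..
  have "Psi k m u A' \<le> ((\<Sum>x<m. ln (N x)) + (2 * t + t\<^sup>2) * B) - K2 * (ln (1 + t) + ln \<bar>dt k A\<bar>)"
    unfolding PsiA' lndet using sumA' by simp
  also have "\<dots> \<le> ((\<Sum>x<m. ln (N x)) + (2 * t + t\<^sup>2) * B) - K2 * ((t - t\<^sup>2) + ln \<bar>dt k A\<bar>)"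
    using mult_left_mono[OF add_right_mono[OF ln1t] mk0] by simp
  also have "\<dots> = Psi k m u A + ((2 * t + t\<^sup>2) * B - K2 * (t - t\<^sup>2))"
    unfolding PsiA by (simp add: algebra_simps)
  also have "\<dots> \<le> Psi k m u A - t * \<epsilon>" using key unfolding K2_def by simp
  finally show ?thesis using A'nz unfolding t_def by blast
qed

lemma isotropic:
  assumes k: "0 < k" and m: "0 < m" and gp: "gpos k m u" and ep: "0 < \<epsilon>"
  shows "\<exists>A. dt k A \<noteq> 0 \<and> (\<forall>z. (real m / real k - \<epsilon>) * nsq k z \<le>
            (\<Sum>x<m. (ipk k z (app k A (u x)))\<^sup>2 / nsq k (app k A (u x))))"
proof -
  define c where "c = min 1 (\<epsilon> / (3 * real m)) * \<epsilon>"
  have c0: "0 < c" using ep m by (simp add: c_def)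
  define S where "S = Psi k m u ` {A. dt k A \<noteq> 0}"
  obtain C where C: "\<forall>A. dt k A \<noteq> 0 \<longrightarrow> C \<le> Psi k m u A" using psi_lower[OF k m gp] by blast
  have bdd: "bdd_below S" unfolding S_def bdd_below_def using C by blast
  have "idm \<in> {A. dt k A \<noteq> 0}" using dt_idm[of k] by simp
  hence ne: "S \<noteq> {}" unfolding S_def by blast
  have "Inf S < Inf S + c" using c0 by simp
  hence "\<exists>y\<in>S. y < Inf S + c" using cInf_less_iff[OF ne bdd] by blast
  then obtain y where y: "y \<in> S" "y < Inf S + c" by blast
  then obtain A where A: "dt k A \<noteq> 0" and yA: "y = Psi k m u A" unfolding S_def by blast
  have PA: "Psi k m u A < Inf S + c" using y yA by simp
  have iso: "(real m / real k - \<epsilon>) * nsq k z \<le> (\<Sum>x<m. (ipk k z (app k A (u x)))\<^sup>2 / nsq k (app k A (u x)))" for z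
  proof (rule ccontr)
    assume "\<not> (real m / real k - \<epsilon>) * nsq k z \<le> (\<Sum>x<m. (ipk k z (app k A (u x)))\<^sup>2 / nsq k (app k A (u x)))"
    hence lt: "(\<Sum>x<m. (ipk k z (app k A (u x)))\<^sup>2 / nsq k (app k A (u x))) < (real m / real k - \<epsilon>) * nsq k z" by simp
    have nz: "nsq k z \<noteq> 0"
    proof
      assume "nsq k z = 0"
      hence "\<And>w. ipk k z w = 0" by (rule ipk_zero)
      thus False using lt \<open>nsq k z = 0\<close> by simp
    qed
    hence zp: "0 < nsq k z" using nsq_nonneg[of k z] by linarith
    define e where "e j = (1 / sqrt (nsq k z)) * z j" for j
    have e1: "nsq k e = 1"
      unfolding e_def nsq_scale using zp by (simp add: power_divide)
    have ipe: "ipk k e w = ipk k z w / sqrt (nsq k z)" for w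
      unfolding e_def ipk_scale by simp
    have "(\<Sum>x<m. (ipk k e (app k A (u x)))\<^sup>2 / nsq k (app k A (u x)))
        = (\<Sum>x<m. (ipk k z (app k A (u x)))\<^sup>2 / nsq k (app k A (u x))) / nsq k z"
      unfolding ipe using zp by (simp add: power_divide sum_divide_distrib mult.commute)
    also have "\<dots> < real m / real k - \<epsilon>" using lt zp by (simp add: divide_less_eq)
    finally have b: "(\<Sum>x<m. (ipk k e (app k A (u x)))\<^sup>2 / nsq k (app k A (u x))) \<le> real m / real k - \<epsilon>" by simp
    obtain A' where A': "dt k A' \<noteq> 0" "Psi k m u A' \<le> Psi k m u A - c"
      using stretch[OF k m gp A e1 ep b] unfolding c_def by blast
    have "Inf S \<le> Psi k m u A'" using A' bdd unfolding S_def by (intro cInf_lower) auto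
    thus False using A' PA by simp
  qed
  show ?thesis using A iso by blast
qed

lemma mod_inj:
  assumes "i < m" "j < m" "(t + i) mod m = (t + j) mod (m::nat)"
  shows "i = j"
proof (rule ccontr)
  assume ne: "i \<noteq> j"
  have H: False if ab: "a < b" "b < m" "(t + a) mod m = (t + b) mod m" for a b
  proof -
    have "m dvd (t + b) - (t + a)" using mod_eq_dvd_iff_nat[of "t + a" "t + b" m] ab by simp
    hence "m dvd b - a" by simp
    moreover have "0 < b - a" "b - a < m" using ab by auto
    ultimately show False using nat_dvd_not_less by blast
  qed
  show False
  proof (cases "i < j")
    case True thus False using H[of i j] assms by simp
  next
    case False hence "j < i" using ne by simp
    thus False using H[of j i] assms by simp
  qed
qed

lemma vandermonde:
  fixes \<tau> :: "nat \<Rightarrow> real"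
  assumes inj: "inj_on \<tau> {..<k}"
  shows "dt k (\<lambda>i j. (\<tau> i) ^ j) \<noteq> 0"
proof
  assume "dt k (\<lambda>i j. (\<tau> i) ^ j) = 0"
  hence "det (mat k k (\<lambda>(i,j). (\<tau> i) ^ j)) = 0" unfolding dt_def by simp
  then obtain v where v: "v \<in> carrier_vec k" "v \<noteq> 0\<^sub>v k" "mat k k (\<lambda>(i,j). (\<tau> i) ^ j) *\<^sub>v v = 0\<^sub>v k"
    using det_0_iff_vec_prod_zero_field[of "mat k k (\<lambda>(i,j). (\<tau> i) ^ j)" k] by auto
  define P where "P = (\<Sum>j<k. monom (v $ j) j)"
  have coeffP: "coeff P n = (if n < k then v $ n else 0)" for n
  proof -
    have "coeff P n = (\<Sum>j<k. if n = j then v $ j else 0)"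
      unfolding P_def coeff_sum by (intro sum.cong) (auto simp: coeff_monom)
    thus ?thesis by simp
  qed
  have roots: "poly P (\<tau> i) = 0" if i: "i < k" for i
  proof -
    have "(mat k k (\<lambda>(i,j). (\<tau> i) ^ j) *\<^sub>v v) $ i = 0" using v(3) i by simp
    hence "(\<Sum>j<k. (\<tau> i) ^ j * v $ j) = 0"
      using i v(1) by (simp add: index_mult_mat_vec scalar_prod_def atLeast0LessThan)
    thus ?thesis unfolding P_def poly_sum poly_monom by (simp add: mult.commute)
  qed
  show False
  proof (cases "P = 0")
    case True
    have "v = 0\<^sub>v k"
    proof (rule eq_vecI)
      fix j assume "j < dim_vec (0\<^sub>v k :: real vec)"
      hence j: "j < k" by simp
      have "coeff P j = 0" using True by simp
      thus "v $ j = 0\<^sub>v k $ j" using coeffP[of j] j by simp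
    qed (use v(1) in simp)
    thus False using v(2) by simp
  next
    case False
    have deg: "degree P \<le> k - 1" by (rule degree_le) (auto simp: coeffP)
    have "\<tau> ` {..<k} \<subseteq> {x. poly P x = 0}" using roots by auto
    hence "card (\<tau> ` {..<k}) \<le> card {x. poly P x = 0}"
      using poly_roots_finite[OF False] by (intro card_mono) auto
    also have "\<dots> \<le> degree P" by (rule card_poly_roots_bound[OF False])
    finally have "k \<le> degree P" using card_image[OF inj] by simp
    moreover have "k \<noteq> 0"
    proof
      assume "k = 0" hence "P = 0" unfolding P_def by simp
      thus False using False by simp
    qed
    ultimately show False using deg by simp
  qed
qed

lemma dt_poly:
  "\<exists>p. \<forall>S. dt k (\<lambda>i j. S * U i j + Q i j) = poly p S \<and> poly p 0 = dt k Q"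
proof -
  define p where "p = (\<Sum>\<pi> | \<pi> permutes {0..<k}. of_int (sign \<pi>) * (\<Prod>i\<in>{0..<k}. [: Q i (\<pi> i), U i (\<pi> i) :]))"
  have ev: "dt k (\<lambda>i j. S * U i j + Q i j) = poly p S" for S
  proof -
    have "dt k (\<lambda>i j. S * U i j + Q i j) = (\<Sum>\<pi> | \<pi> permutes {0..<k}. of_int (sign \<pi>) * (\<Prod>i = 0..<k. mat k k (\<lambda>(i,j). S * U i j + Q i j) $$ (i, \<pi> i)))"
      unfolding dt_def by (rule det_def') simp
    also have "\<dots> = poly p S"
      unfolding p_def poly_sum poly_mult poly_prod
    proof (rule sum.cong[OF refl])
      fix \<pi> assume "\<pi> \<in> {\<pi>. \<pi> permutes {0..<k}}"
      hence pk: "\<And>i. i < k \<Longrightarrow> \<pi> i < k" using permutes_in_image[of \<pi> "{0..<k}"] by auto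
      show "of_int (sign \<pi>) * (\<Prod>i = 0..<k. mat k k (\<lambda>(i,j). S * U i j + Q i j) $$ (i, \<pi> i)) =
            poly (of_int (sign \<pi>)) S * (\<Prod>i = 0..<k. poly [: Q i (\<pi> i), U i (\<pi> i) :] S)"
        using pk by (auto simp: algebra_simps intro!: prod.cong)
    qed
    finally show ?thesis .
  qed
  show ?thesis using ev[of 0] ev by (intro exI[of _ p]) simp
qed

lemma ipk_add: "ipk k (\<lambda>j. a j + e * b j) c = ipk k a c + e * ipk k b c"
  unfolding ipk_def by (simp add: algebra_simps sum.distrib sum_distrib_left)

lemma dt_smult: "dt k (\<lambda>i j. e * F i j) = e ^ k * dt k F"
proof -
  have "mat k k (\<lambda>(i,j). e * F i j) = e \<cdot>\<^sub>m mat k k (\<lambda>(i,j). F i j)"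
    by (rule eq_matI) auto
  thus ?thesis unfolding dt_def by (simp add: det_smult)
qed

lemma perturb:
  fixes u v s :: "nat \<Rightarrow> nat \<Rightarrow> real" and m m' k :: nat
  assumes k: "0 < k" and km: "k \<le> m"
    and sgn: "\<forall>x<m. \<forall>y<m'. 0 < s x y * ipk k (u x) (v y)"
    and s1: "\<forall>x<m. \<forall>y<m'. \<bar>s x y\<bar> = 1"
  shows "\<exists>u'. gpos k m u' \<and> (\<forall>x<m. \<forall>y<m'. 0 < s x y * ipk k (u' x) (v y))"
proof -
  have m: "0 < m" using k km by simp
  define q where "q x j = (real x) ^ j" for x j :: nat
  have Qnz: "dt k (\<lambda>i j. q (win m t i) j) \<noteq> 0" if t: "t < m" for t
  proof -
    have "inj_on (\<lambda>i. real (win m t i)) {..<k}"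
    proof (rule inj_onI)
      fix i j assume "i \<in> {..<k}" "j \<in> {..<k}" "real (win m t i) = real (win m t j)"
      thus "i = j" using mod_inj[of i m j t] km unfolding win_def by simp
    qed
    thus ?thesis using vandermonde[of "\<lambda>i. real (win m t i)" k] unfolding q_def by simp
  qed
  have "\<forall>t. \<exists>p. t < m \<longrightarrow> p \<noteq> 0 \<and> (\<forall>S. dt k (\<lambda>i j. S * u (win m t i) j + q (win m t i) j) = poly p S)"
  proof (intro allI)
    fix t
    obtain p where p: "\<forall>S. dt k (\<lambda>i j. S * u (win m t i) j + q (win m t i) j) = poly p S \<and> poly p 0 = dt k (\<lambda>i j. q (win m t i) j)"
      using dt_poly[of k "\<lambda>i j. u (win m t i) j" "\<lambda>i j. q (win m t i) j"] by blast
    show "\<exists>p. t < m \<longrightarrow> p \<noteq> 0 \<and> (\<forall>S. dt k (\<lambda>i j. S * u (win m t i) j + q (win m t i) j) = poly p S)"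
    proof (intro exI[of _ p] impI conjI)
      assume "t < m"
      thus "p \<noteq> 0" using p Qnz by auto
      show "\<forall>S. dt k (\<lambda>i j. S * u (win m t i) j + q (win m t i) j) = poly p S" using p by blast
    qed
  qed
  then obtain pp where pp: "\<And>t. t < m \<Longrightarrow> pp t \<noteq> 0 \<and> (\<forall>S. dt k (\<lambda>i j. S * u (win m t i) j + q (win m t i) j) = poly (pp t) S)"
    by metis
  define Roots where "Roots = (\<Union>t<m. {S. poly (pp t) S = 0})"
  have fR: "finite Roots" unfolding Roots_def using pp poly_roots_finite by auto
  define D where "D = {s x y * ipk k (u x) (v y) / (\<bar>ipk k (q x) (v y)\<bar> + 1) | x y. x < m \<and> y < m'}"
  have fD: "finite D"
  proof -
    have eqD: "D = (\<lambda>(x,y). s x y * ipk k (u x) (v y) / (\<bar>ipk k (q x) (v y)\<bar> + 1)) ` ({..<m} \<times> {..<m'})"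
      unfolding D_def by auto
    show ?thesis unfolding eqD by (rule finite_imageI) simp
  qed
  define d0 where "d0 = Min (insert 1 D)"
  have d0pos: "0 < d0"
    unfolding d0_def using fD sgn unfolding D_def by (auto intro!: divide_pos_pos simp: Min_gr_iff)
  have d0le: "d0 \<le> s x y * ipk k (u x) (v y) / (\<bar>ipk k (q x) (v y)\<bar> + 1)" if "x < m" "y < m'" for x y
    unfolding d0_def using fD that unfolding D_def by (intro Min_le) auto
  define S0 where "S0 = Max (insert (1 / d0) Roots) + 1"
  have S0a: "1 / d0 < S0"
  proof -
    have "1 / d0 \<le> Max (insert (1 / d0) Roots)" using fR by (intro Max_ge) auto
    thus ?thesis unfolding S0_def by simp
  qed
  have S0b: "S0 \<notin> Roots"
  proof
    assume "S0 \<in> Roots"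
    hence "S0 \<le> Max (insert (1 / d0) Roots)" using fR by simp
    thus False unfolding S0_def by simp
  qed
  have S0pos: "0 < S0" using S0a d0pos by (smt (verit) divide_pos_pos)
  define e where "e = 1 / S0"
  have e0: "0 < e" using S0pos by (simp add: e_def)
  have eS: "e * S0 = 1" using S0pos by (simp add: e_def)
  have ed: "e < d0" using S0a d0pos S0pos unfolding e_def by (simp add: field_simps)
  define u' where "u' x j = u x j + e * q x j" for x j
  show ?thesis
  proof (intro exI[of _ u'] conjI allI impI)
    show "gpos k m u'"
      unfolding gpos_def
    proof (intro allI impI)
      fix t assume t: "t < m"
      have "dt k (\<lambda>i j. u' (win m t i) j) = dt k (\<lambda>i j. e * (S0 * u (win m t i) j + q (win m t i) j))"
        unfolding u'_def using eS by (intro arg_cong[of _ _ "dt k"] ext) (simp add: algebra_simps)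
      also have "\<dots> = e ^ k * dt k (\<lambda>i j. S0 * u (win m t i) j + q (win m t i) j)"
        by (rule dt_smult)
      also have "\<dots> = e ^ k * poly (pp t) S0" using pp[OF t] by simp
      finally show "dt k (\<lambda>i j. u' (win m t i) j) \<noteq> 0"
        using S0b t e0 unfolding Roots_def by auto
    qed
  next
    fix x y assume x: "x < m" and y: "y < m'"
    have "s x y * ipk k (u' x) (v y) = s x y * ipk k (u x) (v y) + e * (s x y * ipk k (q x) (v y))"
      unfolding u'_def ipk_add by (simp add: algebra_simps)
    moreover have "e * (s x y * ipk k (q x) (v y)) \<ge> - (e * \<bar>ipk k (q x) (v y)\<bar>)"
    proof -
      have "\<bar>s x y * ipk k (q x) (v y)\<bar> = \<bar>ipk k (q x) (v y)\<bar>" using s1 x y by (simp add: abs_mult)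
      hence h: "- \<bar>ipk k (q x) (v y)\<bar> \<le> s x y * ipk k (q x) (v y)" by linarith
      have "e * (- \<bar>ipk k (q x) (v y)\<bar>) \<le> e * (s x y * ipk k (q x) (v y))"
        by (rule mult_left_mono[OF h]) (use e0 in simp)
      thus ?thesis by simp
    qed
    moreover have "e * \<bar>ipk k (q x) (v y)\<bar> < s x y * ipk k (u x) (v y)"
    proof -
      have "e * \<bar>ipk k (q x) (v y)\<bar> \<le> e * (\<bar>ipk k (q x) (v y)\<bar> + 1)" using e0 by simp
      also have "\<dots> < d0 * (\<bar>ipk k (q x) (v y)\<bar> + 1)"
        by (rule mult_strict_right_mono[OF ed]) (simp add: add_pos_nonneg)
      also have "\<dots> \<le> s x y * ipk k (u x) (v y)"
        using d0le[OF x y] by (simp add: pos_le_divide_eq add_pos_nonneg)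
      finally show ?thesis .
    qed
    ultimately show "0 < s x y * ipk k (u' x) (v y)" by linarith
  qed
qed

lemma inv_exists:
  assumes A: "dt k A \<noteq> 0"
  shows "\<exists>B. \<forall>j<k. \<forall>l<k. (\<Sum>i<k. A i j * B i l) = idm j l"
proof -
  define M where "M = mat k k (\<lambda>(i,j). A i j)"
  have Mc: "M \<in> carrier_mat k k" unfolding M_def by simp
  have "det (transpose_mat M) \<noteq> 0" using A det_transpose[OF Mc] unfolding dt_def M_def by simp
  hence "transpose_mat M \<in> Units (ring_mat TYPE(real) k ())"
    by (intro det_non_zero_imp_unit) (use Mc in auto)
  then obtain X where X: "X \<in> carrier_mat k k" "transpose_mat M * X = 1\<^sub>m k"
    unfolding Units_def by (auto simp: ring_mat_simps)
  define B where "B i l = X $$ (i, l)" for i l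
  show ?thesis
  proof (intro exI[of _ B] allI impI)
    fix j l assume j: "j < k" and l: "l < k"
    have "(transpose_mat M * X) $$ (j, l) = (\<Sum>i<k. A i j * B i l)"
      using X(1) j l unfolding M_def B_def
      by (simp add: index_mult_mat scalar_prod_def atLeast0LessThan)
    moreover have "(transpose_mat M * X) $$ (j, l) = idm j l"
      using X(2) j l by (simp add: idm_def)
    ultimately show "(\<Sum>i<k. A i j * B i l) = idm j l" by simp
  qed
qed

lemma ipk_AB:
  assumes B: "\<forall>j<k. \<forall>l<k. (\<Sum>i<k. A i j * B i l) = idm j l"
  shows "ipk k (app k A a) (app k B b) = ipk k a b"
proof -
  have "ipk k (app k A a) (app k B b) = (\<Sum>i<k. (\<Sum>j<k. A i j * a j) * (\<Sum>l<k. B i l * b l))"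
    unfolding ipk_def app_def ..
  also have "\<dots> = (\<Sum>i<k. \<Sum>j<k. \<Sum>l<k. (A i j * a j) * (B i l * b l))"
    by (simp add: sum_product)
  also have "\<dots> = (\<Sum>j<k. \<Sum>i<k. \<Sum>l<k. (A i j * a j) * (B i l * b l))"
    by (rule sum.swap)
  also have "\<dots> = (\<Sum>j<k. \<Sum>l<k. \<Sum>i<k. (A i j * a j) * (B i l * b l))"
    by (rule sum.cong[OF refl], rule sum.swap)
  also have "\<dots> = (\<Sum>j<k. \<Sum>l<k. a j * b l * (\<Sum>i<k. A i j * B i l))"
    by (simp add: sum_distrib_left algebra_simps)
  also have "\<dots> = (\<Sum>j<k. \<Sum>l<k. a j * (idm j l * b l))"
    using B by (intro sum.cong refl) (auto simp: algebra_simps)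
  also have "\<dots> = (\<Sum>j<k. a j * b j)"
    by (intro sum.cong refl) (simp add: sum_distrib_left[symmetric] sum_idm_left)
  also have "\<dots> = ipk k a b" unfolding ipk_def ..
  finally show ?thesis .
qed

lemma sqrt_CS:
  fixes a b :: "nat \<Rightarrow> real"
  assumes a: "\<forall>j\<in>J. 0 \<le> a j" and b: "\<forall>j\<in>J. 0 \<le> b j"
  shows "(\<Sum>j\<in>J. sqrt (a j) * sqrt (b j)) \<le> sqrt (\<Sum>j\<in>J. a j) * sqrt (\<Sum>j\<in>J. b j)"
proof -
  have "(\<Sum>j\<in>J. sqrt (a j) * sqrt (b j))\<^sup>2 \<le> (\<Sum>j\<in>J. (sqrt (a j))\<^sup>2) * (\<Sum>j\<in>J. (sqrt (b j))\<^sup>2)"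
    by (rule CS_sum)
  also have "\<dots> = (\<Sum>j\<in>J. a j) * (\<Sum>j\<in>J. b j)" using a b by simp
  finally have h: "(\<Sum>j\<in>J. sqrt (a j) * sqrt (b j))\<^sup>2 \<le> (\<Sum>j\<in>J. a j) * (\<Sum>j\<in>J. b j)" .
  have "(\<Sum>j\<in>J. sqrt (a j) * sqrt (b j)) \<le> sqrt ((\<Sum>j\<in>J. sqrt (a j) * sqrt (b j))\<^sup>2)"
    by simp
  also have "\<dots> \<le> sqrt ((\<Sum>j\<in>J. a j) * (\<Sum>j\<in>J. b j))" by (rule real_sqrt_le_mono[OF h])
  also have "\<dots> = sqrt (\<Sum>j\<in>J. a j) * sqrt (\<Sum>j\<in>J. b j)" by (rule real_sqrt_mult)
  finally show ?thesis .
qed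

theorem forster:
  fixes u v s :: "nat \<Rightarrow> nat \<Rightarrow> real" and m m' k :: nat and \<sigma> :: real
  assumes k: "0 < k" and km: "k \<le> m" and m': "0 < m'"
    and sgn: "\<forall>x<m. \<forall>y<m'. 0 < s x y * ipk k (u x) (v y)"
    and s1: "\<forall>x<m. \<forall>y<m'. \<bar>s x y\<bar> = 1"
    and sig: "0 \<le> \<sigma>"
    and nb: "\<forall>a b. (\<Sum>x<m. \<Sum>y<m'. s x y * a x * b y) \<le> \<sigma> * sqrt (\<Sum>x<m. (a x)\<^sup>2) * sqrt (\<Sum>y<m'. (b y)\<^sup>2)"
  shows "real m * real m' \<le> \<sigma>\<^sup>2 * (real k)\<^sup>2"
proof -
  have m: "0 < m" using k km by simp
  obtain u' where gp: "gpos k m u'" and sgn': "\<forall>x<m. \<forall>y<m'. 0 < s x y * ipk k (u' x) (v y)"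
    using perturb[OF k km sgn s1] by blast
  have main: "real m' * (real m / real k - \<epsilon>) \<le> \<sigma> * (sqrt (real m) * sqrt (real m'))" if ep: "0 < \<epsilon>" for \<epsilon>
  proof -
    obtain A where A: "dt k A \<noteq> 0" and iso: "\<forall>z. (real m / real k - \<epsilon>) * nsq k z \<le>
            (\<Sum>x<m. (ipk k z (app k A (u' x)))\<^sup>2 / nsq k (app k A (u' x)))"
      using isotropic[OF k m gp ep] by blast
    obtain B where B: "\<forall>j<k. \<forall>l<k. (\<Sum>i<k. A i j * B i l) = idm j l" using inv_exists[OF A] by blast
    define U where "U x = app k A (u' x)" for x
    define Z where "Z y = app k B (v y)" for y
    have UZ: "ipk k (U x) (Z y) = ipk k (u' x) (v y)" for x y
      unfolding U_def Z_def by (rule ipk_AB[OF B])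
    have Upos: "0 < nsq k (U x)" if "x < m" for x unfolding U_def by (rule nsq_pos[OF gp A that k])
    have Zpos: "0 < nsq k (Z y)" if y: "y < m'" for y
    proof -
      have "ipk k (U 0) (Z y) \<noteq> 0" using sgn' m y UZ[of 0 y] by fastforce
      hence "ipk k (Z y) (U 0) \<noteq> 0" by (simp add: ipk_comm)
      hence "nsq k (Z y) \<noteq> 0" using ipk_zero[of k "Z y" "U 0"] by blast
      thus ?thesis using nsq_nonneg[of k "Z y"] by linarith
    qed
    define Uh where "Uh x = (\<lambda>j. (1 / sqrt (nsq k (U x))) * U x j)" for x
    define Zh where "Zh y = (\<lambda>j. (1 / sqrt (nsq k (Z y))) * Z y j)" for y
    have Uh1: "nsq k (Uh x) = 1" if "x < m" for x
      unfolding Uh_def nsq_scale using Upos[OF that] by (simp add: power_divide)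
    have Zh1: "nsq k (Zh y) = 1" if "y < m'" for y
      unfolding Zh_def nsq_scale using Zpos[OF that] by (simp add: power_divide)
    define r where "r x y = ipk k (Uh x) (Zh y)" for x y
    have r_eq: "r x y = ipk k (u' x) (v y) / (sqrt (nsq k (U x)) * sqrt (nsq k (Z y)))" for x y
      unfolding r_def Uh_def Zh_def ipk_scale ipk_scale2 UZ by simp
    have sr: "s x y * r x y = \<bar>r x y\<bar>" if xy: "x < m" "y < m'" for x y
    proof -
      have d: "0 < sqrt (nsq k (U x)) * sqrt (nsq k (Z y))" using Upos[OF xy(1)] Zpos[OF xy(2)] by simp
      have "0 < s x y * ipk k (u' x) (v y)" using sgn' xy by blast
      hence "0 < s x y * ipk k (u' x) (v y) / (sqrt (nsq k (U x)) * sqrt (nsq k (Z y)))"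
        using d by simp
      hence pos: "0 < s x y * r x y" unfolding r_eq by (simp add: mult.assoc)
      have "\<bar>s x y * r x y\<bar> = \<bar>r x y\<bar>" using s1 xy by (simp add: abs_mult)
      thus ?thesis using pos by simp
    qed
    have rsq: "(r x y)\<^sup>2 \<le> \<bar>r x y\<bar>" if xy: "x < m" "y < m'" for x y
    proof -
      have "(r x y)\<^sup>2 \<le> 1" using ipk_CS[of k "Uh x" "Zh y"] Uh1[OF xy(1)] Zh1[OF xy(2)] unfolding r_def by simp
      hence r1: "\<bar>r x y\<bar> \<le> 1" by (simp add: abs_square_le_1)
      have "\<bar>r x y\<bar> * \<bar>r x y\<bar> \<le> \<bar>r x y\<bar> * 1" by (rule mult_left_mono[OF r1]) simp
      moreover have "(r x y)\<^sup>2 = \<bar>r x y\<bar> * \<bar>r x y\<bar>" by (simp add: power2_eq_square)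
      ultimately show ?thesis by simp
    qed
    have r2: "(r x y)\<^sup>2 = (ipk k (Zh y) (U x))\<^sup>2 / nsq k (U x)" if x: "x < m" for x y
      unfolding r_def Uh_def ipk_scale using Upos[OF x] by (simp add: ipk_comm power_divide power_mult_distrib)
    have lower: "real m / real k - \<epsilon> \<le> (\<Sum>x<m. s x y * r x y)" if y: "y < m'" for y
    proof -
      have "real m / real k - \<epsilon> = (real m / real k - \<epsilon>) * nsq k (Zh y)" using Zh1[OF y] by simp
      also have "\<dots> \<le> (\<Sum>x<m. (ipk k (Zh y) (U x))\<^sup>2 / nsq k (U x))" using iso unfolding U_def by blast
      also have "\<dots> = (\<Sum>x<m. (r x y)\<^sup>2)" using r2 by (intro sum.cong) auto
      also have "\<dots> \<le> (\<Sum>x<m. s x y * r x y)" using rsq sr y by (intro sum_mono) auto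
      finally show ?thesis .
    qed
    have L: "real m' * (real m / real k - \<epsilon>) \<le> (\<Sum>x<m. \<Sum>y<m'. s x y * r x y)"
    proof -
      have "real m' * (real m / real k - \<epsilon>) = (\<Sum>y<m'. (real m / real k - \<epsilon>))" by simp
      also have "\<dots> \<le> (\<Sum>y<m'. \<Sum>x<m. s x y * r x y)" using lower by (intro sum_mono) auto
      also have "\<dots> = (\<Sum>x<m. \<Sum>y<m'. s x y * r x y)" by (rule sum.swap)
      finally show ?thesis .
    qed
    have "(\<Sum>x<m. \<Sum>y<m'. s x y * r x y) = (\<Sum>x<m. \<Sum>y<m'. \<Sum>j<k. s x y * Uh x j * Zh y j)"
      unfolding r_def ipk_def by (simp add: sum_distrib_left mult.assoc)
    also have "\<dots> = (\<Sum>x<m. \<Sum>j<k. \<Sum>y<m'. s x y * Uh x j * Zh y j)"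
      by (rule sum.cong[OF refl], rule sum.swap)
    also have "\<dots> = (\<Sum>j<k. \<Sum>x<m. \<Sum>y<m'. s x y * Uh x j * Zh y j)"
      by (rule sum.swap)
    also have "\<dots> \<le> (\<Sum>j<k. \<sigma> * sqrt (\<Sum>x<m. (Uh x j)\<^sup>2) * sqrt (\<Sum>y<m'. (Zh y j)\<^sup>2))"
    proof (rule sum_mono)
      fix j
      show "(\<Sum>x<m. \<Sum>y<m'. s x y * Uh x j * Zh y j) \<le> \<sigma> * sqrt (\<Sum>x<m. (Uh x j)\<^sup>2) * sqrt (\<Sum>y<m'. (Zh y j)\<^sup>2)"
        using nb[rule_format, of "\<lambda>x. Uh x j" "\<lambda>y. Zh y j"] by simp
    qed
    also have "\<dots> = \<sigma> * (\<Sum>j<k. sqrt (\<Sum>x<m. (Uh x j)\<^sup>2) * sqrt (\<Sum>y<m'. (Zh y j)\<^sup>2))"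
      by (simp add: sum_distrib_left mult.assoc)
    also have "\<dots> \<le> \<sigma> * (sqrt (\<Sum>j<k. \<Sum>x<m. (Uh x j)\<^sup>2) * sqrt (\<Sum>j<k. \<Sum>y<m'. (Zh y j)\<^sup>2))"
      by (rule mult_left_mono[OF sqrt_CS sig]) (auto intro: sum_nonneg)
    also have "(\<Sum>j<k. \<Sum>x<m. (Uh x j)\<^sup>2) = real m"
    proof -
      have "(\<Sum>j<k. \<Sum>x<m. (Uh x j)\<^sup>2) = (\<Sum>x<m. \<Sum>j<k. (Uh x j)\<^sup>2)" by (rule sum.swap)
      also have "\<dots> = (\<Sum>x<m. nsq k (Uh x))" unfolding nsq_eq ..
      also have "\<dots> = (\<Sum>x<m. 1)" using Uh1 by (intro sum.cong) auto
      finally show ?thesis by simp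
    qed
    also have "(\<Sum>j<k. \<Sum>y<m'. (Zh y j)\<^sup>2) = real m'"
    proof -
      have "(\<Sum>j<k. \<Sum>y<m'. (Zh y j)\<^sup>2) = (\<Sum>y<m'. \<Sum>j<k. (Zh y j)\<^sup>2)" by (rule sum.swap)
      also have "\<dots> = (\<Sum>y<m'. nsq k (Zh y))" unfolding nsq_eq ..
      also have "\<dots> = (\<Sum>y<m'. 1)" using Zh1 by (intro sum.cong) auto
      finally show ?thesis by simp
    qed
    finally show ?thesis using L by simp
  qed
  define R where "R = \<sigma> * (sqrt (real m) * sqrt (real m'))"
  have h: "real m' * real m / real k \<le> R"
  proof (rule field_le_epsilon)
    fix e :: real assume e: "0 < e"
    have "real m' * (real m / real k - e / real m') \<le> R" using main[of "e / real m'"] e m' by (simp add: R_def)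
    thus "real m' * real m / real k \<le> R + e" using m' by (simp add: right_diff_distrib)
  qed
  have "(real m' * real m / real k)\<^sup>2 \<le> R\<^sup>2" using h by (intro power_mono) auto
  also have "R\<^sup>2 = \<sigma>\<^sup>2 * (real m * real m')" unfolding R_def by (simp add: power_mult_distrib)
  finally have "(real m' * real m)\<^sup>2 / (real k)\<^sup>2 \<le> \<sigma>\<^sup>2 * (real m * real m')" by (simp add: power_divide)
  hence h2: "(real m * real m') * (real m * real m') \<le> (\<sigma>\<^sup>2 * (real k)\<^sup>2) * (real m * real m')"
    using k by (simp add: divide_le_eq power2_eq_square algebra_simps)
  have "0 < real m * real m'" using m m' by simp
  thus ?thesis using h2 by (meson mult_right_le_imp_le)
qed

lemma prod_split: "(\<Prod>i<n+n. f i) = (\<Prod>i<n. f i) * (\<Prod>i<n. f (n + i))" for f :: "nat \<Rightarrow> real"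
proof -
  have "(\<Prod>i<n+n. f i) = prod f {0..<n} * prod f {n..<n+n}"
    using prod.atLeastLessThan_concat[of 0 n "n+n" f] by (simp add: atLeast0LessThan)
  also have "prod f {n..<n+n} = prod f {0+n..<n+n}" by simp
  also have "\<dots> = (\<Prod>i=0..<n. f (i + n))" by (rule prod.shift_bounds_nat_ivl)
  finally show ?thesis by (simp add: atLeast0LessThan add.commute)
qed

lemma lists_Suc: "{X::bool list. length X = Suc n} = (\<lambda>(b,X). b # X) ` (UNIV \<times> {X. length X = n})"
proof
  show "{X::bool list. length X = Suc n} \<subseteq> (\<lambda>(b,X). b # X) ` (UNIV \<times> {X. length X = n})"
  proof
    fix X :: "bool list" assume "X \<in> {X. length X = Suc n}"
    then obtain b Y where "X = b # Y" "length Y = n" by (auto simp: length_Suc_conv)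
    thus "X \<in> (\<lambda>(b,X). b # X) ` (UNIV \<times> {X. length X = n})" by force
  qed
qed auto

lemma sum_lists_prod:
  "(\<Sum>X\<in>{X::bool list. length X = n}. \<Prod>i<n. g i (X!i)) = (\<Prod>i<n. (g i False + g i True :: real))"
proof (induction n arbitrary: g)
  case 0
  have "{X::bool list. length X = 0} = {[]}" by auto
  thus ?case by simp
next
  case (Suc n)
  have inj: "inj_on (\<lambda>(b,X). b # X) (UNIV \<times> {X::bool list. length X = n})"
    by (auto simp: inj_on_def)
  have "(\<Sum>X\<in>{X::bool list. length X = Suc n}. \<Prod>i<Suc n. g i (X!i))
      = (\<Sum>bX\<in>UNIV \<times> {X::bool list. length X = n}. (\<lambda>X. \<Prod>i<Suc n. g i (X!i)) ((\<lambda>(b,X). b # X) bX))"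
    unfolding lists_Suc by (simp only: sum.reindex[OF inj] comp_def)
  also have "\<dots> = (\<Sum>bX\<in>UNIV \<times> {X::bool list. length X = n}. (\<lambda>(b,X). g 0 b * (\<Prod>i<n. g (Suc i) (X!i))) bX)"
    by (rule sum.cong[OF refl]) (auto simp: prod.lessThan_Suc_shift simp del: prod.lessThan_Suc)
  also have "\<dots> = (\<Sum>b\<in>UNIV. \<Sum>X\<in>{X::bool list. length X = n}. g 0 b * (\<Prod>i<n. g (Suc i) (X!i)))"
    by (rule sum.cartesian_product[symmetric])
  also have "\<dots> = (\<Sum>b\<in>UNIV. g 0 b * (\<Prod>i<n. (g (Suc i) False + g (Suc i) True)))"
    using Suc.IH[of "\<lambda>i b. g (Suc i) b"] by (simp add: sum_distrib_left[symmetric])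
  also have "\<dots> = (g 0 False + g 0 True) * (\<Prod>i<n. (g (Suc i) False + g (Suc i) True))"
    by (simp add: UNIV_bool algebra_simps)
  also have "\<dots> = (\<Prod>i<Suc n. (g i False + g i True))"
    by (simp add: prod.lessThan_Suc_shift del: prod.lessThan_Suc)
  finally show ?case .
qed

definition chi :: "nat \<Rightarrow> bool list \<Rightarrow> bool list \<Rightarrow> real" where
  "chi n X Y = (\<Prod>i<n. if X!i \<and> Y!i then -1 else 1)"

lemma prod_sign: "(\<Prod>i<(n::nat). if P i then -1 else 1 :: real) = (if odd (card {i. i < n \<and> P i}) then -1 else 1)"
proof (induction n)
  case 0 thus ?case by simp
next
  case (Suc n)
  show ?case
  proof (cases "P n")
    case True
    have e: "{i. i < Suc n \<and> P i} = insert n {i. i < n \<and> P i}" using True by auto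
    have "card {i. i < Suc n \<and> P i} = Suc (card {i. i < n \<and> P i})" unfolding e by (simp add: card_insert_disjoint)
    thus ?thesis using Suc True by simp
  next
    case False
    have e: "{i. i < Suc n \<and> P i} = {i. i < n \<and> P i}" using False by (auto simp: less_Suc_eq)
    thus ?thesis using Suc False by simp
  qed
qed

lemma IP_chi:
  assumes "length X = n" "length Y = n"
  shows "chi n X Y = (if IP n (X @ Y) then -1 else 1)"
proof -
  have "{i. i < n \<and> (X @ Y) ! i \<and> (X @ Y) ! (n + i)} = {i. i < n \<and> X ! i \<and> Y ! i}"
    using assms by (auto simp: nth_append)
  thus ?thesis unfolding chi_def IP_def prod_sign by simp
qed

lemma chi_pm: "chi n X Y = 1 \<or> chi n X Y = -1"
  unfolding chi_def prod_sign by simp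

lemma chi_orth:
  assumes Y: "length Y = n" and Y': "length Y' = n"
  shows "(\<Sum>X\<in>{X::bool list. length X = n}. chi n X Y * chi n X Y') = (if Y = Y' then 2 ^ n else 0)"
proof -
  define g where "g i b = (if b \<and> Y!i then -1 else 1) * (if b \<and> Y'!i then -1 else (1::real))" for i b
  have "(\<Sum>X\<in>{X::bool list. length X = n}. chi n X Y * chi n X Y') = (\<Sum>X\<in>{X::bool list. length X = n}. \<Prod>i<n. g i (X!i))"
    unfolding chi_def g_def by (simp add: prod.distrib)
  also have "\<dots> = (\<Prod>i<n. (g i False + g i True))" by (rule sum_lists_prod)
  also have "\<dots> = (if Y = Y' then 2 ^ n else 0)"
  proof (cases "Y = Y'")
    case True
    hence "(\<Prod>i<n. (g i False + g i True)) = (\<Prod>i<n. 2)" by (intro prod.cong) (auto simp: g_def)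
    thus ?thesis using True by simp
  next
    case False
    have "\<exists>i<n. Y!i \<noteq> Y'!i"
    proof (rule ccontr)
      assume "\<not> (\<exists>i<n. Y!i \<noteq> Y'!i)"
      hence "Y = Y'" using Y Y' by (intro nth_equalityI) auto
      thus False using False by simp
    qed
    then obtain i where i: "i < n" "Y!i \<noteq> Y'!i" by blast
    have "(\<Prod>i<n. (g i False + g i True)) = 0"
      by (rule prod_zero) (use i in \<open>auto simp: g_def intro!: bexI[of _ i]\<close>)
    thus ?thesis using False by simp
  qed
  finally show ?thesis .
qed

lemma CS_sqrt: "(\<Sum>i\<in>I. f i * g i) \<le> sqrt (\<Sum>i\<in>I. (f i)\<^sup>2) * sqrt (\<Sum>i\<in>I. (g i :: real)\<^sup>2)"
proof -
  have "(\<Sum>i\<in>I. f i * g i) \<le> sqrt ((\<Sum>i\<in>I. f i * g i)\<^sup>2)" by simp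
  also have "\<dots> \<le> sqrt ((\<Sum>i\<in>I. (f i)\<^sup>2) * (\<Sum>i\<in>I. (g i)\<^sup>2))" by (rule real_sqrt_le_mono[OF CS_sum])
  also have "\<dots> = sqrt (\<Sum>i\<in>I. (f i)\<^sup>2) * sqrt (\<Sum>i\<in>I. (g i)\<^sup>2)" by (rule real_sqrt_mult)
  finally show ?thesis .
qed

lemma lindsey:
  fixes s :: "nat \<Rightarrow> nat \<Rightarrow> real" and M :: nat
  assumes orth: "\<forall>y<M. \<forall>y'<M. (\<Sum>x<M. s x y * s x y') = (if y = y' then real M else 0)"
  shows "(\<Sum>x<M. \<Sum>y<M. s x y * a x * b y) \<le> sqrt (real M) * sqrt (\<Sum>x<M. (a x)\<^sup>2) * sqrt (\<Sum>y<M. (b y)\<^sup>2)"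
proof -
  define c where "c x = (\<Sum>y<M. s x y * b y)" for x
  have "(\<Sum>x<M. \<Sum>y<M. s x y * a x * b y) = (\<Sum>x<M. a x * c x)"
    unfolding c_def by (simp add: sum_distrib_left algebra_simps)
  also have "\<dots> \<le> sqrt (\<Sum>x<M. (a x)\<^sup>2) * sqrt (\<Sum>x<M. (c x)\<^sup>2)" by (rule CS_sqrt)
  also have "(\<Sum>x<M. (c x)\<^sup>2) = real M * (\<Sum>y<M. (b y)\<^sup>2)"
  proof -
    have "(\<Sum>x<M. (c x)\<^sup>2) = (\<Sum>x<M. \<Sum>y<M. \<Sum>y'<M. (s x y * b y) * (s x y' * b y'))"
      unfolding c_def power2_eq_square by (simp add: sum_product)
    also have "\<dots> = (\<Sum>y<M. \<Sum>x<M. \<Sum>y'<M. (s x y * b y) * (s x y' * b y'))"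
      by (rule sum.swap)
    also have "\<dots> = (\<Sum>y<M. \<Sum>y'<M. \<Sum>x<M. (s x y * b y) * (s x y' * b y'))"
      by (rule sum.cong[OF refl], rule sum.swap)
    also have "\<dots> = (\<Sum>y<M. \<Sum>y'<M. b y * b y' * (\<Sum>x<M. s x y * s x y'))"
      by (simp add: sum_distrib_left algebra_simps)
    also have "\<dots> = (\<Sum>y<M. \<Sum>y'<M. b y * b y' * (if y = y' then real M else 0))"
      using orth by (intro sum.cong refl) auto
    also have "\<dots> = (\<Sum>y<M. real M * (b y)\<^sup>2)"
      by (intro sum.cong refl) (simp add: power2_eq_square if_distrib cong: if_cong)
    finally show ?thesis by (simp add: sum_distrib_left)
  qed
  also have "sqrt (real M * (\<Sum>y<M. (b y)\<^sup>2)) = sqrt (real M) * sqrt (\<Sum>y<M. (b y)\<^sup>2)"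
    by (rule real_sqrt_mult)
  finally show ?thesis by (simp add: algebra_simps)
qed

lemma NN_ge_real:
  assumes "\<And>P N. finite P \<Longrightarrow> finite N \<Longrightarrow> nn_rep m f P N \<Longrightarrow> B \<le> real (card (P \<union> N))"
  shows "B \<le> real (NN m f)"
proof -
  obtain P0 N0 where h: "finite P0" "finite N0" "nn_rep m f P0 N0" using nn_rep_exists by blast
  have ex: "\<exists>k P N. finite P \<and> finite N \<and> nn_rep m f P N \<and> card (P \<union> N) = k"
    using h by (intro exI[of _ "card (P0 \<union> N0)"] exI[of _ P0] exI[of _ N0]) simp
  have "\<exists>P N. finite P \<and> finite N \<and> nn_rep m f P N \<and> card (P \<union> N) = NN m f"
    unfolding NN_def by (rule LeastI_ex[OF ex])
  then obtain P N where "finite P" "finite N" "nn_rep m f P N" "card (P \<union> N) = NN m f" by blast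
  thus ?thesis using assms[of P N] by simp
qed

lemma part_a_rep:
  assumes fP: "finite P" and fN: "finite N" and rep: "nn_rep (2 * n) (IP n) P N"
  shows "sqrt (2 ^ n) \<le> real (card (P \<union> N))"
proof -
  obtain w p q where pq: "\<forall>j i. 0 < p j i \<and> 0 < q j i" and
    r: "\<forall>a. length a = 2 * n \<longrightarrow>
       (\<Sum>j<card (P \<union> N). w j * (\<Prod>i<2 * n. if a!i then p j i else q j i)) \<noteq> (0::real) \<and>
       (IP n a \<longleftrightarrow> 0 < (\<Sum>j<card (P \<union> N). w j * (\<Prod>i<2 * n. if a!i then p j i else q j i)))"
    using exp_rep[OF fP fN rep] by blast
  define k where "k = card (P \<union> N)"
  define N0 where "N0 = (2::nat) ^ n"
  have N0pos: "0 < N0" unfolding N0_def by simp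
  define F where "F a = (\<Sum>j<k. w j * (\<Prod>i<2 * n. if a!i then p j i else q j i))" for a
  have rF: "F a \<noteq> 0 \<and> (IP n a \<longleftrightarrow> 0 < F a)" if "length a = 2 * n" for a
    using r that unfolding F_def k_def by blast
  define ux where "ux X j = (\<Prod>i<n. if X!i then p j i else q j i)" for X j
  define vy where "vy Y j = w j * (\<Prod>i<n. if Y!i then p j (n+i) else q j (n+i))" for Y j
  have Fsplit: "F (X @ Y) = ipk k (ux X) (vy Y)" if X: "length X = n" and Y: "length Y = n" for X Y
  proof -
    have "F (X @ Y) = (\<Sum>j<k. w j * ((\<Prod>i<n. if (X@Y)!i then p j i else q j i) *
            (\<Prod>i<n. if (X@Y)!(n+i) then p j (n+i) else q j (n+i))))"
      unfolding F_def mult_2 prod_split ..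
    also have "\<dots> = ipk k (ux X) (vy Y)"
      unfolding ipk_def ux_def vy_def using X Y by (intro sum.cong refl) (simp add: nth_append algebra_simps)
    finally show ?thesis .
  qed
  define L where "L = {X::bool list. length X = n}"
  have cardL: "card L = N0" unfolding L_def N0_def using card_lists_length_eq[of "UNIV::bool set" n] by simp
  have finL: "finite L" unfolding L_def by (rule finite_len)
  obtain e where e: "bij_betw e {0..<N0} L" using ex_bij_betw_nat_finite[OF finL] cardL by metis
  have eL: "length (e x) = n" if "x < N0" for x using bij_betwE[OF e] that unfolding L_def by auto
  have einj: "x = y" if "e x = e y" "x < N0" "y < N0" for x y
    using bij_betw_imp_inj_on[OF e] that by (auto dest: inj_onD)
  have k0: "0 < k"
  proof -
    have "F (replicate (2*n) False) \<noteq> 0" using rF by simp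
    hence "k \<noteq> 0" unfolding F_def by (cases k) auto
    thus ?thesis by simp
  qed
  show ?thesis
  proof (cases "k \<le> N0")
    case False
    have "sqrt (real N0) \<le> sqrt ((real N0)\<^sup>2)"
      using N0pos by (intro real_sqrt_le_mono) (simp add: power2_eq_square)
    also have "\<dots> = real N0" by simp
    also have "real N0 \<le> real k" using False by simp
    finally show ?thesis unfolding k_def N0_def by simp
  next
    case True
    define u where "u x = ux (e x)" for x
    define v where "v y = vy (e y)" for y
    define s where "s x y = - chi n (e x) (e y)" for x y
    have sgn: "\<forall>x<N0. \<forall>y<N0. 0 < s x y * ipk k (u x) (v y)"
    proof (intro allI impI)
      fix x y assume x: "x < N0" and y: "y < N0"
      have lx: "length (e x) = n" and ly: "length (e y) = n" using eL x y by auto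
      have la: "length (e x @ e y) = 2 * n" using lx ly by simp
      have Fe: "F (e x @ e y) = ipk k (u x) (v y)" unfolding u_def v_def by (rule Fsplit[OF lx ly])
      have s_eq: "s x y = (if IP n (e x @ e y) then 1 else -1)" unfolding s_def using IP_chi[OF lx ly] by simp
      show "0 < s x y * ipk k (u x) (v y)"
      proof (cases "IP n (e x @ e y)")
        case True
        thus ?thesis using rF[OF la] unfolding s_eq Fe by simp
      next
        case False
        hence "F (e x @ e y) < 0" using rF[OF la] by auto
        thus ?thesis using False unfolding s_eq Fe by simp
      qed
    qed
    have s1: "\<forall>x<N0. \<forall>y<N0. \<bar>s x y\<bar> = 1"
    proof (intro allI impI)
      fix x y
      have "chi n (e x) (e y) = 1 \<or> chi n (e x) (e y) = -1" by (rule chi_pm)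
      thus "\<bar>s x y\<bar> = 1" unfolding s_def by auto
    qed
    have orth: "\<forall>y<N0. \<forall>y'<N0. (\<Sum>x<N0. s x y * s x y') = (if y = y' then real N0 else 0)"
    proof (intro allI impI)
      fix y y' assume y: "y < N0" and y': "y' < N0"
      have "(\<Sum>x<N0. s x y * s x y') = (\<Sum>x\<in>{0..<N0}. (\<lambda>X. chi n X (e y) * chi n X (e y')) (e x))"
        unfolding s_def by (simp add: atLeast0LessThan)
      also have "\<dots> = (\<Sum>X\<in>L. chi n X (e y) * chi n X (e y'))" by (rule sum.reindex_bij_betw[OF e])
      also have "\<dots> = (if e y = e y' then 2 ^ n else 0)" unfolding L_def by (rule chi_orth[OF eL[OF y] eL[OF y']])
      also have "\<dots> = (if y = y' then real N0 else 0)" using einj[OF _ y y'] unfolding N0_def by auto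
      finally show "(\<Sum>x<N0. s x y * s x y') = (if y = y' then real N0 else 0)" .
    qed
    have nb: "\<forall>a b. (\<Sum>x<N0. \<Sum>y<N0. s x y * a x * b y) \<le> sqrt (real N0) * sqrt (\<Sum>x<N0. (a x)\<^sup>2) * sqrt (\<Sum>y<N0. (b y)\<^sup>2)"
      using lindsey[OF orth] by blast
    have "real N0 * real N0 \<le> (sqrt (real N0))\<^sup>2 * (real k)\<^sup>2"
      by (rule forster[OF k0 True N0pos sgn s1 _ nb]) simp
    hence "real N0 * real N0 \<le> real N0 * (real k)\<^sup>2" by simp
    hence "real N0 \<le> (real k)\<^sup>2" using N0pos by simp
    hence "sqrt (real N0) \<le> sqrt ((real k)\<^sup>2)" by (rule real_sqrt_le_mono)
    thus ?thesis unfolding N0_def k_def by simp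
  qed
qed

theorem theorem8:
  fixes n :: nat
  shows "real (NN (2 * n) (IP n)) \<ge> 2 powr (real n / 2) \<and> NN n parity \<ge> n + 1"
proof
  have "2 powr (real n / 2) = sqrt (2 ^ n)" by (simp add: powr_half_sqrt_powr powr_realpow)
  moreover have "sqrt (2 ^ n) \<le> real (NN (2 * n) (IP n))"
    by (rule NN_ge_real) (rule part_a_rep)
  ultimately show "real (NN (2 * n) (IP n)) \<ge> 2 powr (real n / 2)" by simp
  show "NN n parity \<ge> n + 1" by (rule part_b)
qed

end
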